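(* Let $\mathcal H$ be the cyclotomic Hecke algebra (Ariki–Koike algebra) defined in the context, and let $T_0,T_1,\dots,T_{n-1}\in\mathrm{End}_{\mathbb K}(V^{\otimes n})$ be the operators defined in the context. Then there is a (unique) $\mathbb K$-algebra homomorphism $\Phi:\mathcal H\to\mathrm{End}_{\mathbb K}(V^{\otimes n})$ with $\Phi(g_a)=T_a$ for $a=0,1,\dots,n-1$; that is, $g_a\mapsto T_a$ defines a (super) representation of $\mathcal H$ on $V^{\otimes n}$.
   Context: Let $m,n\ge 1$ and $\mathbb K=\mathbb C(q,Q_1,\dots,Q_m)$, the field of rational functions in indeterminates $q,Q_1,\dots,Q_m$. The cyclotomic Hecke algebra $\mathcal H$ of type $G(m,1,n)$ is the unital associative $\mathbb K$-algebra generated by $g_0,g_1,\dots,g_{n-1}$ subject to: $(g_0-Q_1)\cdots(g_0-Q_m)=0$; $g_0g_1g_0g_1=g_1g_0g_1g_0$; $g_i^2=(q-q^{-1})g_i+1$ for $1\le i\le n-1$; $g_ig_j=g_jg_i$ for $0\le i,j\le n-1$ with $|i-j|\ge 2$; $g_ig_{i+1}g_i=g_{i+1}g_ig_{i+1}$ for $1\le i\le n-2$. Fix nonnegative integers $k_1,\dots,k_m,\ell_1,\dots,\ell_m$ with $N=\sum_{c=1}^m(k_c+\ell_c)>0$. Let $V$ be a $\mathbb K$-superspace with homogeneous basis $\{v^{(c)}_a:1\le c\le m,\ 1\le a\le k_c+\ell_c\}$, where $v^{(c)}_a$ is even if $a\le k_c$ and odd if $a>k_c$; $v^{(c)}_a$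 is said to have colour $c$. Totally order this basis by $v^{(c)}_a<v^{(c')}_b$ iff $c<c'$, or $c=c'$ and $a<b$, and write it as $u_1<u_2<\cdots<u_N$. Let $\bar j\in\{0,1\}$ denote the parity of $u_j$ and $\mathrm{col}(j)$ its colour. For $\mathbf i=(i_1,\dots,i_n)\in\{1,\dots,N\}^n$ we also write $\mathbf i$ for the basis vector $u_{i_1}\otimes\cdots\otimes u_{i_n}$ of $V^{\otimes n}$, put $c_t(\mathbf i)=\mathrm{col}(i_t)$, and for $1\le a\le n-1$ let $\mathbf i s_a$ be $\mathbf i$ with the $a$-th and $(a+1)$-th entries interchanged. Define $\mathbb K$-linear operators on $V^{\otimes n}$ on basis vectors by: $s_a(\mathbf i)=(-1)^{\bar i_a}\mathbf i$ if $i_a=i_{a+1}$, and $s_a(\mathbf i)=(-1)^{\bar i_a\bar i_{a+1}}\mathbf i s_a$ if $i_a\ne i_{a+1}$; $T_a(\mathbf i)=(q-q^{-1})\mathbf i+(-1)^{\bar i_a\bar i_{a+1}}\mathbf i s_a$ if $i_a<i_{a+1}$; $T_a(\mathbf i)=\frac{(q-q^{-1})+(-1)^{\bar i_a}(q+q^{-1})}{2}\mathbf i$ if $i_a=i_{a+1}$; $T_a(\mathbf i)=(-1)^{\bar i_a\bar i_{a+1}}\mathbf i s_a$ if $i_a>i_{a+1}$; $S_a(\mathbf i)=T_a(\mathbf i)$ if $c_a(\mathbf i)=c_{a+1}(\mathbf i)$ and $S_a(\mathbf i)=s_a(\mathbf i)$ otherwise; $S_0(\mathbf i)=Q_{c_1(\mathbf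 i)}\mathbf i$; $\theta=S_{n-1}\cdots S_1$ (composition of operators); and $T_0=T_1^{-1}\cdots T_{n-1}^{-1}\,\theta\, S_0$ (each $T_a$, $1\le a\le n-1$, is invertible). *)

theory Defs
  imports Complex_Main "HOL-Library.Poly_Mapping" "HOL-Computational_Algebra.Fraction_Field"
begin

text \<open>Multivariate polynomials over the complex numbers in indeterminates x_0, x_1, x_2, ...
  (monomials are finitely supported exponent vectors), and their fraction field.\<close>

type_synonym mpoly = "(nat \<Rightarrow>\<^sub>0 nat) \<Rightarrow>\<^sub>0 complex"
type_synonym K = "mpoly fract"

definition indet :: "nat \<Rightarrow> K" where
  "indet i = Fract (Poly_Mapping.single (Poly_Mapping.single i 1) 1) 1"

definition qq :: K where "qq = indet 0"

definition QQ :: "nat \<Rightarrow> K" where "QQ c = indet c"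

text \<open>The basis vector v^(c)_a is represented by the pair (c, a), with 1 \<le> c \<le> m and
  1 \<le> a \<le> k c + l c.  A basis vector of the n-fold tensor power is a list of length n
  of such pairs.  k c, l c are k_c, l_c.\<close>

type_synonym idx = "(nat \<times> nat) list"

definition basis :: "nat \<Rightarrow> nat \<Rightarrow> (nat \<Rightarrow> nat) \<Rightarrow> (nat \<Rightarrow> nat) \<Rightarrow> idx set" where
  "basis m n k l = {i. length i = n \<and>
      (\<forall>x\<in>set i. 1 \<le> fst x \<and> fst x \<le> m \<and> 1 \<le> snd x \<and> snd x \<le> k (fst x) + l (fst x))}"

definition odd_vec :: "(nat \<Rightarrow> nat) \<Rightarrow> nat \<times> nat \<Rightarrow> bool" where
  "odd_vec k x = (snd x > k (fst x))"

definition vless :: "nat \<times> nat \<Rightarrow> nat \<times> nat \<Rightarrow> bool" where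
  "vless x y = (fst x < fst y \<or> (fst x = fst y \<and> snd x < snd y))"

definition sgn_of :: "bool \<Rightarrow> K" where
  "sgn_of b = (if b then -1 else 1)"

text \<open>interchange the a-th and (a+1)-th entries (1-based positions)\<close>
definition swp :: "idx \<Rightarrow> nat \<Rightarrow> idx" where
  "swp i a = i[a - 1 := i ! a, a := i ! (a - 1)]"

text \<open>An operator A is represented by its matrix w.r.t. the basis: A i j is the
  coefficient of the basis vector j in A(i).\<close>

type_synonym op = "idx \<Rightarrow> idx \<Rightarrow> K"

definition op_id :: op where
  "op_id i j = (if i = j then 1 else 0)"

text \<open>ocomp B A is the composition B \<circ> A (first A, then B).\<close>
definition ocomp :: "idx set \<Rightarrow> op \<Rightarrow> op \<Rightarrow> op" where
  "ocomp Bs B A i j = (\<Sum>r\<in>Bs. A i r * B r j)"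

fun ocomps :: "idx set \<Rightarrow> op list \<Rightarrow> op" where
  "ocomps Bs [] = op_id"
| "ocomps Bs (A # As) = ocomp Bs A (ocomps Bs As)"

definition oadd :: "op \<Rightarrow> op \<Rightarrow> op" where
  "oadd A B i j = A i j + B i j"

definition osmult :: "K \<Rightarrow> op \<Rightarrow> op" where
  "osmult c A i j = c * A i j"

definition oeq :: "idx set \<Rightarrow> op \<Rightarrow> op \<Rightarrow> bool" where
  "oeq Bs A B = (\<forall>i\<in>Bs. \<forall>j\<in>Bs. A i j = B i j)"

definition oinv :: "idx set \<Rightarrow> op \<Rightarrow> op" where
  "oinv Bs A = (THE S. (\<forall>i j. i \<notin> Bs \<or> j \<notin> Bs \<longrightarrow> S i j = 0) \<and>
                       oeq Bs (ocomp Bs S A) op_id \<and> oeq Bs (ocomp Bs A S) op_id)"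

definition s_op :: "(nat \<Rightarrow> nat) \<Rightarrow> nat \<Rightarrow> op" where
  "s_op k a i j =
     (let x = i ! (a - 1); y = i ! a in
      if x = y then (if j = i then sgn_of (odd_vec k x) else 0)
      else (if j = swp i a then sgn_of (odd_vec k x \<and> odd_vec k y) else 0))"

definition T_op :: "(nat \<Rightarrow> nat) \<Rightarrow> nat \<Rightarrow> op" where
  "T_op k a i j =
     (let x = i ! (a - 1); y = i ! a in
      if vless x y then
        (if j = i then qq - inverse qq else 0)
        + (if j = swp i a then sgn_of (odd_vec k x \<and> odd_vec k y) else 0)
      else if x = y then
        (if j = i then ((qq - inverse qq) + sgn_of (odd_vec k x) * (qq + inverse qq)) / 2 else 0)
      else (if j = swp i a then sgn_of (odd_vec k x \<and> odd_vec k y) else 0))"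

definition S_op :: "(nat \<Rightarrow> nat) \<Rightarrow> nat \<Rightarrow> op" where
  "S_op k a i j =
     (if fst (i ! (a - 1)) = fst (i ! a) then T_op k a i j else s_op k a i j)"

definition S0_op :: op where
  "S0_op i j = (if j = i then QQ (fst (i ! 0)) else 0)"

definition theta_op :: "idx set \<Rightarrow> nat \<Rightarrow> (nat \<Rightarrow> nat) \<Rightarrow> op" where
  "theta_op Bs n k = ocomps Bs (map (S_op k) (rev [1..<n]))"

definition T0_op :: "idx set \<Rightarrow> nat \<Rightarrow> (nat \<Rightarrow> nat) \<Rightarrow> op" where
  "T0_op Bs n k = ocomps Bs (map (\<lambda>a. oinv Bs (T_op k a)) [1..<n] @ [theta_op Bs n k, S0_op])"

definition TT :: "idx set \<Rightarrow> nat \<Rightarrow> (nat \<Rightarrow> nat) \<Rightarrow> nat \<Rightarrow> op" where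
  "TT Bs n k a = (if a = 0 then T0_op Bs n k else T_op k a)"

end

theory Submission
  imports Defs
begin

lemma two_neq0: "(2::K) \<noteq> 0"
proof -
  have e: "(2::K) = Fract (of_nat 2) 1" by (metis of_nat_fract of_nat_numeral)
  have "(of_nat 2 :: mpoly) \<noteq> 0" by (metis of_nat_eq_0_iff zero_neq_numeral)
  then show ?thesis unfolding e by (simp add: Zero_fract_def eq_fract)
qed

lemma qq_neq0: "qq \<noteq> 0"
  unfolding qq_def indet_def by (simp add: Zero_fract_def eq_fract) (metis lookup_single_eq lookup_zero one_neq_zero)

definition tt :: K where "tt = qq - inverse qq"

definition act :: "idx set \<Rightarrow> op \<Rightarrow> (idx \<Rightarrow> K) \<Rightarrow> idx \<Rightarrow> K" where
  "act Bs A F i = (\<Sum>r\<in>Bs. A i r * F r)"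

definition semR :: "idx set \<Rightarrow> op \<Rightarrow> (idx \<Rightarrow> K) \<Rightarrow> idx \<Rightarrow> K" where
  "semR Bs A F i = (if i \<in> Bs then act Bs A F i else 0)"

definition prj :: "idx set \<Rightarrow> (idx \<Rightarrow> K) \<Rightarrow> idx \<Rightarrow> K" where
  "prj Bs F i = (if i \<in> Bs then F i else 0)"

definition dv :: "(nat \<Rightarrow> nat) \<Rightarrow> nat \<times> nat \<Rightarrow> K" where
  "dv k x = (if odd_vec k x then - inverse qq else qq)"
definition cT :: "(nat \<Rightarrow> nat) \<Rightarrow> nat \<times> nat \<Rightarrow> nat \<times> nat \<Rightarrow> K" where
  "cT k x y = (if vless x y then tt else if x = y then dv k x else 0)"
definition eT :: "(nat \<Rightarrow> nat) \<Rightarrow> nat \<times> nat \<Rightarrow> nat \<times> nat \<Rightarrow> K" where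
  "eT k x y = (if x = y then 0 else sgn_of (odd_vec k x \<and> odd_vec k y))"
definition cs :: "(nat \<Rightarrow> nat) \<Rightarrow> nat \<times> nat \<Rightarrow> nat \<times> nat \<Rightarrow> K" where
  "cs k x y = (if x = y then sgn_of (odd_vec k x) else 0)"
definition Dg :: "(idx \<Rightarrow> K) \<Rightarrow> op" where
  "Dg f i j = (if j = i then f i else 0)"

definition cS :: "(nat \<Rightarrow> nat) \<Rightarrow> nat \<times> nat \<Rightarrow> nat \<times> nat \<Rightarrow> K" where
  "cS k x y = (if fst x = fst y then cT k x y else cs k x y)"

lemma vless_irrefl[simp]: "\<not> vless x x"
  by (simp add: vless_def)

lemma swp_at: "length pre = a - 1 \<Longrightarrow> 1 \<le> a \<Longrightarrow> swp (pre @ x # y # rest) a = pre @ y # x # rest"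
  unfolding swp_def by (cases a) (auto simp: nth_append list_update_append)

lemma diag_val: "((qq - inverse qq) + sgn_of b * (qq + inverse qq)) / 2 = (if b then - inverse qq else qq)"
  using two_neq0 by (auto simp: sgn_of_def field_simps)

lemma swp_same: "i!(a-1) = i!a \<Longrightarrow> swp i a = i"
  unfolding swp_def by (metis list_update_id)

lemma T_op_mk2: "T_op k a i j = (if j = i then cT k (i!(a-1)) (i!a) else 0) + (if j = swp i a then eT k (i!(a-1)) (i!a) else 0)"
  unfolding T_op_def cT_def eT_def Let_def diag_val dv_def
  by (simp add: swp_same tt_def)


lemma s_op_mk2: "s_op k a i j = (if j = i then cs k (i!(a-1)) (i!a) else 0) + (if j = swp i a then eT k (i!(a-1)) (i!a) else 0)"
  unfolding s_op_def cs_def eT_def Let_def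
  by (simp add: swp_same)

lemma S_op_mk2: "S_op k a i j = (if j = i then cS k (i!(a-1)) (i!a) else 0) + (if j = swp i a then eT k (i!(a-1)) (i!a) else 0)"
  unfolding S_op_def cS_def T_op_mk2 s_op_mk2 by auto

lemma act_mk2:
  assumes fin: "finite Bs" and i: "i \<in> Bs" and sw: "i' \<in> Bs"
    and A: "\<And>r. r \<in> Bs \<Longrightarrow> A i r = (if r = i then \<alpha> else 0) + (if r = i' then \<beta> else 0)"
  shows "act Bs A F i = \<alpha> * F i + \<beta> * F i'"
proof -
  have "act Bs A F i = (\<Sum>r\<in>Bs. (if r = i then \<alpha> * F r else 0) + (if r = i' then \<beta> * F r else 0))"
    unfolding act_def by (rule sum.cong) (auto simp: A distrib_right)
  also have "\<dots> = \<alpha> * F i + \<beta> * F i'"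
    using fin i sw by (simp add: sum.distrib)
  finally show ?thesis .
qed


lemma act_comp: "act Bs (ocomp Bs B A) F i = act Bs A (act Bs B F) i"
proof -
  have "act Bs (ocomp Bs B A) F i = (\<Sum>r\<in>Bs. \<Sum>s\<in>Bs. A i s * B s r * F r)"
    unfolding act_def ocomp_def by (simp add: sum_distrib_right)
  also have "\<dots> = (\<Sum>s\<in>Bs. \<Sum>r\<in>Bs. A i s * B s r * F r)"
    by (rule sum.swap)
  also have "\<dots> = act Bs A (act Bs B F) i"
    unfolding act_def by (simp add: sum_distrib_left mult.assoc)
  finally show ?thesis .
qed

lemma semR_comp: "semR Bs (ocomp Bs B A) = semR Bs A \<circ> semR Bs B"
proof (rule ext, rule ext)
  fix F i
  show "semR Bs (ocomp Bs B A) F i = (semR Bs A \<circ> semR Bs B) F i"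
    unfolding semR_def comp_def act_comp by (simp add: act_def cong: sum.cong)
qed

lemma semR_id: "finite Bs \<Longrightarrow> semR Bs op_id = prj Bs"
proof (rule ext, rule ext)
  fix F i assume fin: "finite Bs"
  have "(\<Sum>r\<in>Bs. op_id i r * F r) = (\<Sum>r\<in>Bs. if r = i then F r else 0)"
    by (rule sum.cong) (auto simp: op_id_def)
  then show "semR Bs op_id F i = prj Bs F i" using fin by (simp add: semR_def act_def prj_def)
qed

lemma semR_prj: "semR Bs A \<circ> prj Bs = semR Bs A"
  by (rule ext)+ (simp add: semR_def act_def prj_def cong: sum.cong)

lemma prj_semR: "prj Bs \<circ> semR Bs A = semR Bs A"
  by (rule ext)+ (simp add: semR_def prj_def)

lemma oeq_semR: "finite Bs \<Longrightarrow> oeq Bs A B \<longleftrightarrow> semR Bs A = semR Bs B"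
proof
  assume "oeq Bs A B" then show "semR Bs A = semR Bs B"
    by (intro ext) (simp add: semR_def act_def oeq_def)
next
  assume fin: "finite Bs" and e: "semR Bs A = semR Bs B"
  show "oeq Bs A B" unfolding oeq_def
  proof (intro ballI)
    fix i j assume i: "i \<in> Bs" and j: "j \<in> Bs"
    have "semR Bs A (\<lambda>r. if r = j then 1 else 0) i = semR Bs B (\<lambda>r. if r = j then 1 else 0) i" using e by simp
    then show "A i j = B i j" using i j fin by (simp add: semR_def act_def if_distrib cong: if_cong)
  qed
qed

lemma semR_ocomps_Cons: "semR Bs (ocomps Bs (A # As)) = semR Bs (ocomps Bs As) \<circ> semR Bs A"
  by (simp add: semR_comp)
lemma semR_ocomps_Nil: "finite Bs \<Longrightarrow> semR Bs (ocomps Bs []) = prj Bs"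
  by (simp add: semR_id)

lemma vless_trans: "vless x y \<Longrightarrow> vless y z \<Longrightarrow> vless x z"
  by (auto simp: vless_def)
lemma vless_asym: "vless x y \<Longrightarrow> \<not> vless y x"
  by (auto simp: vless_def)
lemma vless_lin: "x \<noteq> y \<Longrightarrow> \<not> vless x y \<Longrightarrow> vless y x"
  by (cases x, cases y) (auto simp: vless_def)
lemma vless_fst: "vless x y \<Longrightarrow> fst x \<le> fst y"
  by (auto simp: vless_def)
lemma fst_vless: "fst x < fst y \<Longrightarrow> vless x y"
  by (auto simp: vless_def)

lemma swp3_1: "length pre = a - 1 \<Longrightarrow> 1 \<le> a \<Longrightarrow> swp (pre @ x # y # z # post) a = pre @ y # x # z # post"
  by (rule swp_at)
lemma swp3_2: "length pre = a - 1 \<Longrightarrow> 1 \<le> a \<Longrightarrow> swp (pre @ x # y # z # post) (Suc a) = pre @ x # z # y # post"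
  using swp_at[of "pre @ [x]" "Suc a" y z post] by simp

lemma nth3: "length pre = a - 1 \<Longrightarrow> 1 \<le> a \<Longrightarrow>
   (pre @ x # rest) ! (a - Suc 0) = x \<and> (pre @ x # y # rest) ! a = y \<and> (pre @ x # y # z # rest) ! Suc a = z"
  by (cases a) (auto simp: nth_append)

lemma vless_facts: "vless x y \<Longrightarrow> \<not> vless y x \<and> x \<noteq> y \<and> y \<noteq> x"
  using vless_asym by auto

lemma ord3:
  obtains (c1) "x = y" "y = z"
  | (c2) "x = y" "vless y z"
  | (c3) "x = y" "vless z y"
  | (c4) "y = z" "vless x y"
  | (c5) "y = z" "vless y x"
  | (c6) "x = z" "vless x y"
  | (c7) "x = z" "vless y x"
  | (c8) "vless x y" "vless y z" "vless x z"
  | (c9) "vless x z" "vless z y" "vless x y"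
  | (c10) "vless y x" "vless x z" "vless y z"
  | (c11) "vless y z" "vless z x" "vless y x"
  | (c12) "vless z x" "vless x y" "vless z y"
  | (c13) "vless z y" "vless y x" "vless z x"
  by (metis vless_lin vless_trans)

lemma ord3f:
  obtains (c1) "x = y" "y = z"
  | (c2) "x = y" "vless y z" "fst y \<le> fst z"
  | (c3) "x = y" "vless z y" "fst z \<le> fst y"
  | (c4) "y = z" "vless x y" "fst x \<le> fst y"
  | (c5) "y = z" "vless y x" "fst y \<le> fst x"
  | (c6) "x = z" "vless x y" "fst x \<le> fst y"
  | (c7) "x = z" "vless y x" "fst y \<le> fst x"
  | (c8) "vless x y" "vless y z" "vless x z" "fst x \<le> fst y" "fst y \<le> fst z"
  | (c9) "vless x z" "vless z y" "vless x y" "fst x \<le> fst z" "fst z \<le> fst y"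
  | (c10) "vless y x" "vless x z" "vless y z" "fst y \<le> fst x" "fst x \<le> fst z"
  | (c11) "vless y z" "vless z x" "vless y x" "fst y \<le> fst z" "fst z \<le> fst x"
  | (c12) "vless z x" "vless x y" "vless z y" "fst z \<le> fst x" "fst x \<le> fst y"
  | (c13) "vless z y" "vless y x" "vless z x" "fst z \<le> fst y" "fst y \<le> fst x"
  by (cases x y z rule: ord3) (simp_all add: vless_fst)

lemma braid_core:
  fixes F :: "idx \<Rightarrow> K"
  shows "cT k x y *
        (cT k y z *
         (cT k x y * F (pre @ x # y # z # post) +
          eT k x y * F (pre @ y # x # z # post)) +
         eT k y z *
         (cT k x z * F (pre @ x # z # y # post) +
          eT k x z * F (pre @ z # x # y # post))) +
        eT k x y *
        (cT k x z *
         (cT k y x * F (pre @ y # x # z # post) +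
          eT k y x * F (pre @ x # y # z # post)) +
         eT k x z *
         (cT k y z * F (pre @ y # z # x # post) +
          eT k y z * F (pre @ z # y # x # post))) =
        cT k y z *
        (cT k x y *
         (cT k y z * F (pre @ x # y # z # post) +
          eT k y z * F (pre @ x # z # y # post)) +
         eT k x y *
         (cT k x z * F (pre @ y # x # z # post) +
          eT k x z * F (pre @ y # z # x # post))) +
        eT k y z *
        (cT k x z *
         (cT k z y * F (pre @ x # z # y # post) +
          eT k z y * F (pre @ x # y # z # post)) +
         eT k x z *
         (cT k x y * F (pre @ z # x # y # post) +
          eT k x y * F (pre @ z # y # x # post)))"
  using qq_neq0
  by (cases x y z rule: ord3;
      simp add: cT_def eT_def dv_def tt_def vless_facts;
      cases "odd_vec k x"; cases "odd_vec k y"; cases "odd_vec k z";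
      simp add: sgn_of_def field_simps)

lemma sgn_sq: "sgn_of b * sgn_of b = 1" by (simp add: sgn_of_def)
lemma sgn_sq2: "sgn_of b * (sgn_of b * z) = (z::K)" by (simp add: sgn_of_def)

lemma dv_sq: "dv k x * dv k x = tt * dv k x + 1"
proof -
  have "qq * inverse qq = 1" using qq_neq0 by simp
  then show ?thesis unfolding dv_def tt_def by (cases "odd_vec k x") (simp_all add: algebra_simps)
qed

lemma dv_sq2: "dv k x * (dv k x * z) = tt * (dv k x * z) + z"
proof -
  have "dv k x * (dv k x * z) = (dv k x * dv k x) * z" by (simp add: mult.assoc)
  also have "\<dots> = tt * (dv k x * z) + z" by (simp add: dv_sq algebra_simps)
  finally show ?thesis .
qed

lemma ord2f:
  obtains (e) "x = y" | (l) "vless x y" "fst x \<le> fst y" | (g) "vless y x" "fst y \<le> fst x"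
  by (metis vless_lin vless_fst)

lemmas arith3 = algebra_simps sgn_sq sgn_sq2 dv_sq dv_sq2 conj_commute conj_left_commute
lemmas defs3 = cS_def cs_def cT_def eT_def vless_facts


locale hb =
  fixes Bs :: "idx set" and n :: nat and k :: "nat \<Rightarrow> nat"
  assumes finB: "finite Bs"
    and lenB: "i \<in> Bs \<Longrightarrow> length i = n"
    and swpB: "i \<in> Bs \<Longrightarrow> 1 \<le> a \<Longrightarrow> a < n \<Longrightarrow> swp i a \<in> Bs"
begin

abbreviation "tO a \<equiv> semR Bs (T_op k a)"
abbreviation "sO a \<equiv> semR Bs (S_op k a)"

lemma tO_app: "1 \<le> a \<Longrightarrow> a < n \<Longrightarrow> i \<in> Bs \<Longrightarrow>
   tO a F i = cT k (i!(a-1)) (i!a) * F i + eT k (i!(a-1)) (i!a) * F (swp i a)"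
  unfolding semR_def by (simp, rule act_mk2[OF finB]) (auto simp: swpB T_op_mk2)

lemma sO_app: "1 \<le> a \<Longrightarrow> a < n \<Longrightarrow> i \<in> Bs \<Longrightarrow>
   sO a F i = cS k (i!(a-1)) (i!a) * F i + eT k (i!(a-1)) (i!a) * F (swp i a)"
  unfolding semR_def by (simp, rule act_mk2[OF finB]) (auto simp: swpB S_op_mk2)

lemma outB: "i \<notin> Bs \<Longrightarrow> semR Bs A F i = 0"
  by (simp add: semR_def)

lemma split3:
  assumes "i \<in> Bs" "1 \<le> a" "Suc a < n"
  obtains pre x y z post where "i = pre @ x # y # z # post" "length pre = a - 1"
proof -
  have len: "length i = n" using assms lenB by simp
  define pre where "pre = take (a-1) i"
  have "i = pre @ drop (a-1) i" by (simp add: pre_def)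
  moreover have "drop (a-1) i = i!(a-1) # i!a # i!(Suc a) # drop (a+2) i"
    using assms len
    by (metis Cons_nth_drop_Suc One_nat_def Suc_diff_1 Suc_lessD add_2_eq_Suc' le_add_diff_inverse less_diff_conv order_less_le_trans plus_1_eq_Suc)
  ultimately have "i = pre @ i!(a-1) # i!a # i!(Suc a) # drop (a+2) i" by simp
  moreover have "length pre = a - 1" using assms len by (simp add: pre_def)
  ultimately show ?thesis using that by blast
qed

lemma perms_in:
  assumes "pre @ x # y # z # post \<in> Bs" "length pre = a - 1" "1 \<le> a" "Suc a < n"
  shows "pre @ y # x # z # post \<in> Bs" "pre @ x # z # y # post \<in> Bs"
    "pre @ y # z # x # post \<in> Bs" "pre @ z # x # y # post \<in> Bs" "pre @ z # y # x # post \<in> Bs"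
proof -
  have s1: "\<And>x y z. pre @ x # y # z # post \<in> Bs \<Longrightarrow> pre @ y # x # z # post \<in> Bs"
    using swpB[of _ a] assms(2-4) by (metis Suc_lessD swp3_1)
  have s2: "\<And>x y z. pre @ x # y # z # post \<in> Bs \<Longrightarrow> pre @ x # z # y # post \<in> Bs"
    using swpB[of _ "Suc a"] assms(2-4) by (metis le_SucI swp3_2)
  show "pre @ y # x # z # post \<in> Bs" using s1 assms(1) .
  show "pre @ x # z # y # post \<in> Bs" using s2 assms(1) .
  show "pre @ y # z # x # post \<in> Bs" using s1 s2 assms(1) by blast
  show "pre @ z # x # y # post \<in> Bs" using s1 s2 assms(1) by blast
  show "pre @ z # y # x # post \<in> Bs" using s1 s2 assms(1) by blast
qed

definition Ti :: "nat \<Rightarrow> op" where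
  "Ti a i j = (if i \<in> Bs \<and> j \<in> Bs then T_op k a i j - (if i = j then tt else 0) else 0)"

definition qv :: "op list \<Rightarrow> op list \<Rightarrow> bool" where
  "qv L1 L2 \<longleftrightarrow> semR Bs (ocomps Bs L1) = semR Bs (ocomps Bs L2)"

lemma semR_Cons: "semR Bs (ocomps Bs (A # As)) F = semR Bs (ocomps Bs As) (semR Bs A F)"
  by (simp add: semR_comp)

lemma semR_Nil: "semR Bs (ocomps Bs []) F i = (if i \<in> Bs then F i else 0)"
  by (simp add: semR_id finB prj_def)

lemma semR_app: "semR Bs (ocomps Bs (xs @ ys)) F = semR Bs (ocomps Bs ys) (semR Bs (ocomps Bs xs) F)"
proof (induction xs arbitrary: F)
  case Nil
  have "semR Bs (ocomps Bs ys) F = semR Bs (ocomps Bs ys) (semR Bs (ocomps Bs []) F)"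
    using semR_prj[of Bs "ocomps Bs ys"] by (simp add: semR_id finB fun_eq_iff)
  then show ?case by simp
next
  case (Cons a xs) then show ?case by (simp add: semR_comp Cons.IH)
qed

lemma qvI: "(\<And>F i. i \<in> Bs \<Longrightarrow> semR Bs (ocomps Bs L1) F i = semR Bs (ocomps Bs L2) F i) \<Longrightarrow> qv L1 L2"
  unfolding qv_def by (intro ext) (metis outB)

lemma qv_refl[simp]: "qv L L" by (simp add: qv_def)
lemma qv_sym: "qv L1 L2 \<Longrightarrow> qv L2 L1" by (simp add: qv_def)
lemma qv_trans[trans]: "qv L1 L2 \<Longrightarrow> qv L2 L3 \<Longrightarrow> qv L1 L3" by (simp add: qv_def)
lemma qv_app: "qv A B \<Longrightarrow> qv C D \<Longrightarrow> qv (A @ C) (B @ D)"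
  unfolding qv_def by (rule ext) (simp add: semR_app)
lemma qv_appL: "qv C D \<Longrightarrow> qv (A @ C) (A @ D)" by (simp add: qv_app)
lemma qv_appR: "qv A B \<Longrightarrow> qv (A @ C) (B @ C)" by (simp add: qv_app)
lemma qv_mid: "qv C D \<Longrightarrow> qv (A @ C @ E) (A @ D @ E)" by (simp add: qv_app)

lemma qv_oeq: "qv L1 L2 \<Longrightarrow> oeq Bs (ocomps Bs L1) (ocomps Bs L2)"
  unfolding qv_def using oeq_semR[OF finB] by simp

lemma qv_single: "qv [ocomps Bs L] L"
  unfolding qv_def by (simp add: semR_comp semR_id finB prj_semR)

lemma split2:
  assumes "i \<in> Bs" "1 \<le> a" "a < n"
  obtains pre x y post where "i = pre @ x # y # post" "length pre = a - 1"
proof -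
  have len: "length i = n" using assms lenB by simp
  define pre where "pre = take (a-1) i"
  have "i = pre @ drop (a-1) i" by (simp add: pre_def)
  moreover have "drop (a-1) i = i!(a-1) # i!a # drop (a+1) i"
  proof -
    have "drop (a-1) i = i!(a-1) # drop (Suc (a-1)) i" using assms len by (intro Cons_nth_drop_Suc[symmetric]) simp
    moreover have "drop a i = i!a # drop (Suc a) i" using assms len by (simp add: Cons_nth_drop_Suc)
    ultimately show ?thesis using assms by simp
  qed
  ultimately have "i = pre @ i!(a-1) # i!a # drop (a+1) i" by simp
  moreover have "length pre = a - 1" using assms len by (simp add: pre_def)
  ultimately show ?thesis using that by blast
qed

lemma nth2: "length pre = a - 1 \<Longrightarrow> 1 \<le> a \<Longrightarrow>
   (pre @ x # rest) ! (a - Suc 0) = x \<and> (pre @ x # y # rest) ! a = y"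
  by (cases a) (auto simp: nth_append)

lemma tO_app2: "1 \<le> a \<Longrightarrow> a < n \<Longrightarrow> i \<in> Bs \<Longrightarrow>
   semR Bs (T_op k a) F i = cT k (i!(a-1)) (i!a) * F i + eT k (i!(a-1)) (i!a) * F (swp i a)"
  by (rule tO_app)

lemma Ti_app: "1 \<le> a \<Longrightarrow> a < n \<Longrightarrow> i \<in> Bs \<Longrightarrow>
   semR Bs (Ti a) F i = (cT k (i!(a-1)) (i!a) - tt) * F i + eT k (i!(a-1)) (i!a) * F (swp i a)"
  unfolding semR_def by (simp, rule act_mk2[OF finB]) (auto simp: swpB T_op_mk2 Ti_def)

lemma Dg_app: "i \<in> Bs \<Longrightarrow> semR Bs (Dg f) F i = f i * F i"
proof -
  assume i: "i \<in> Bs"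
  have "(\<Sum>r\<in>Bs. Dg f i r * F r) = (\<Sum>r\<in>Bs. if r = i then f i * F r else 0)" by (rule sum.cong) (auto simp: Dg_def)
  then show ?thesis using i finB by (simp add: semR_def act_def del: Dg_def)
qed

lemma swp_swp: "1 \<le> a \<Longrightarrow> a < length i \<Longrightarrow> swp (swp i a) a = i"
  unfolding swp_def by (rule nth_equalityI) (auto simp: nth_list_update)





lemma nth_swp_other: "p \<noteq> b - 1 \<Longrightarrow> p \<noteq> b \<Longrightarrow> (swp i b) ! p = i ! p"
  unfolding swp_def by (simp add: nth_list_update)

abbreviation "TO a \<equiv> T_op k a"
abbreviation "SO a \<equiv> S_op k a"

lemma hecke_sem:
  assumes a: "1 \<le> a" "a < n" and i: "i \<in> Bs"
  shows "semR Bs (TO a) (semR Bs (TO a) F) i = tt * semR Bs (TO a) F i + F i"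
proof -
  obtain pre x y post where iq: "i = pre @ x # y # post" and lp: "length pre = a - 1"
    using split2[OF i a] .
  have P: "pre @ y # x # post \<in> Bs" using swpB[OF i a] swp_at[OF lp a(1)] iq by simp
  show ?thesis
    apply (simp add: iq i[unfolded iq] P tO_app[OF a] swp_at[OF lp a(1)] nth2[OF lp a(1)])
    apply (cases x y rule: ord2f)
    apply (simp_all add: defs3)
    apply (simp_all add: arith3)
    done
qed

lemma inv_sem1:
  assumes a: "1 \<le> a" "a < n" and i: "i \<in> Bs"
  shows "semR Bs (TO a) (semR Bs (Ti a) F) i = F i"
proof -
  obtain pre x y post where iq: "i = pre @ x # y # post" and lp: "length pre = a - 1"
    using split2[OF i a] .
  have P: "pre @ y # x # post \<in> Bs" using swpB[OF i a] swp_at[OF lp a(1)] iq by simp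
  show ?thesis
    apply (simp add: iq i[unfolded iq] P tO_app[OF a] Ti_app[OF a] swp_at[OF lp a(1)] nth2[OF lp a(1)])
    apply (cases x y rule: ord2f)
    apply (simp_all add: defs3)
    apply (simp_all add: arith3)
    done
qed

lemma inv_sem2:
  assumes a: "1 \<le> a" "a < n" and i: "i \<in> Bs"
  shows "semR Bs (Ti a) (semR Bs (TO a) F) i = F i"
proof -
  obtain pre x y post where iq: "i = pre @ x # y # post" and lp: "length pre = a - 1"
    using split2[OF i a] .
  have P: "pre @ y # x # post \<in> Bs" using swpB[OF i a] swp_at[OF lp a(1)] iq by simp
  show ?thesis
    apply (simp add: iq i[unfolded iq] P tO_app[OF a] Ti_app[OF a] swp_at[OF lp a(1)] nth2[OF lp a(1)])
    apply (cases x y rule: ord2f)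
    apply (simp_all add: defs3)
    apply (simp_all add: arith3)
    done
qed

lemma inv1: "1 \<le> a \<Longrightarrow> a < n \<Longrightarrow> qv [Ti a, TO a] []"
  by (rule qvI) (simp del: ocomps.simps add: semR_Cons semR_Nil inv_sem1)

lemma inv2: "1 \<le> a \<Longrightarrow> a < n \<Longrightarrow> qv [TO a, Ti a] []"
  by (rule qvI) (simp del: ocomps.simps add: semR_Cons semR_Nil inv_sem2)

definition Pd :: "nat \<Rightarrow> op" where
  "Pd a = Dg (\<lambda>i. if fst (i!(a-1)) < fst (i!a) then 1 else 0)"

lemma F8_sem:
  assumes a: "1 \<le> a" "a < n" and i: "i \<in> Bs"
  shows "semR Bs (SO a) (semR Bs (Ti a) F) i = F i - tt * semR Bs (Pd a) (semR Bs (SO a) F) i"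
proof -
  obtain pre x y post where iq: "i = pre @ x # y # post" and lp: "length pre = a - 1"
    using split2[OF i a] .
  have P: "pre @ y # x # post \<in> Bs" using swpB[OF i a] swp_at[OF lp a(1)] iq by simp
  show ?thesis
    apply (simp add: iq i[unfolded iq] P sO_app[OF a] Ti_app[OF a] swp_at[OF lp a(1)] nth2[OF lp a(1)] Pd_def Dg_app)
    apply (cases x y rule: ord2f)
    apply (simp_all add: defs3)
    apply (simp_all add: arith3)
    done
qed

lemma L3:
  assumes a: "1 \<le> a" "a < n"
  shows "qv [TO a, SO a, SO a] [SO a, SO a, TO a]"
proof (rule qvI)
  fix F i assume i: "i \<in> Bs"
  obtain pre x y post where iq: "i = pre @ x # y # post" and lp: "length pre = a - 1"
    using split2[OF i a] .
  have P: "pre @ y # x # post \<in> Bs" using swpB[OF i a] swp_at[OF lp a(1)] iq by simp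
  show "semR Bs (ocomps Bs [TO a, SO a, SO a]) F i = semR Bs (ocomps Bs [SO a, SO a, TO a]) F i"
    apply (simp only: semR_Cons semR_Nil)
    apply (simp add: iq i[unfolded iq] P sO_app[OF a] tO_app[OF a] swp_at[OF lp a(1)] nth2[OF lp a(1)])
    apply (cases x y rule: ord2f)
    apply (simp_all add: defs3)
    apply (simp_all add: arith3)
    done
qed

lemma braidT:
  assumes a: "1 \<le> a" "Suc a < n"
  shows "qv [TO a, TO (Suc a), TO a] [TO (Suc a), TO a, TO (Suc a)]"
proof (rule qvI)
  fix F i assume i: "i \<in> Bs"
  obtain pre x y z post where iq: "i = pre @ x # y # z # post" and lp: "length pre = a - 1"
    using split3[OF i a] .
  note P = perms_in[OF i[unfolded iq] lp a]
  have a1: "a < n" "Suc a < n" "1 \<le> Suc a" using a by auto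
  show "semR Bs (ocomps Bs [TO a, TO (Suc a), TO a]) F i = semR Bs (ocomps Bs [TO (Suc a), TO a, TO (Suc a)]) F i"
    apply (simp only: semR_Cons semR_Nil)
    apply (simp add: iq i[unfolded iq] P tO_app[OF a(1) a1(1)] tO_app[OF a1(3) a1(2)] sO_app[OF a(1) a1(1)] sO_app[OF a1(3) a1(2)]
         swp3_1[OF lp a(1)] swp3_2[OF lp a(1)] nth3[OF lp a(1)])
    apply (cases x y z rule: ord3f)
    apply (simp_all add: defs3)
    apply (simp_all add: arith3)
    done
qed

lemma L7:
  assumes a: "1 \<le> a" "Suc a < n"
  shows "qv [TO a, SO (Suc a), SO a] [SO (Suc a), SO a, TO (Suc a)]"
proof (rule qvI)
  fix F i assume i: "i \<in> Bs"
  obtain pre x y z post where iq: "i = pre @ x # y # z # post" and lp: "length pre = a - 1"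
    using split3[OF i a] .
  note P = perms_in[OF i[unfolded iq] lp a]
  have a1: "a < n" "Suc a < n" "1 \<le> Suc a" using a by auto
  show "semR Bs (ocomps Bs [TO a, SO (Suc a), SO a]) F i = semR Bs (ocomps Bs [SO (Suc a), SO a, TO (Suc a)]) F i"
    apply (simp only: semR_Cons semR_Nil)
    apply (simp add: iq i[unfolded iq] P tO_app[OF a(1) a1(1)] tO_app[OF a1(3) a1(2)] sO_app[OF a(1) a1(1)] sO_app[OF a1(3) a1(2)]
         swp3_1[OF lp a(1)] swp3_2[OF lp a(1)] nth3[OF lp a(1)])
    apply (cases x y z rule: ord3f)
    apply (simp_all add: defs3)
    apply (simp_all add: arith3)
    done
qed

lemma L8:
  assumes a: "1 \<le> a" "Suc a < n"
  shows "qv [TO (Suc a), SO a, SO (Suc a)] [SO a, SO (Suc a), TO a]"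
proof (rule qvI)
  fix F i assume i: "i \<in> Bs"
  obtain pre x y z post where iq: "i = pre @ x # y # z # post" and lp: "length pre = a - 1"
    using split3[OF i a] .
  note P = perms_in[OF i[unfolded iq] lp a]
  have a1: "a < n" "Suc a < n" "1 \<le> Suc a" using a by auto
  show "semR Bs (ocomps Bs [TO (Suc a), SO a, SO (Suc a)]) F i = semR Bs (ocomps Bs [SO a, SO (Suc a), TO a]) F i"
    apply (simp only: semR_Cons semR_Nil)
    apply (simp add: iq i[unfolded iq] P tO_app[OF a(1) a1(1)] tO_app[OF a1(3) a1(2)] sO_app[OF a(1) a1(1)] sO_app[OF a1(3) a1(2)]
         swp3_1[OF lp a(1)] swp3_2[OF lp a(1)] nth3[OF lp a(1)])
    apply (cases x y z rule: ord3f)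
    apply (simp_all add: defs3)
    apply (simp_all add: arith3)
    done
qed

lemma L9:
  assumes a: "1 \<le> a" "Suc a < n"
  shows "qv [SO a, SO (Suc a), SO a] [SO (Suc a), SO a, SO (Suc a)]"
proof (rule qvI)
  fix F i assume i: "i \<in> Bs"
  obtain pre x y z post where iq: "i = pre @ x # y # z # post" and lp: "length pre = a - 1"
    using split3[OF i a] .
  note P = perms_in[OF i[unfolded iq] lp a]
  have a1: "a < n" "Suc a < n" "1 \<le> Suc a" using a by auto
  show "semR Bs (ocomps Bs [SO a, SO (Suc a), SO a]) F i = semR Bs (ocomps Bs [SO (Suc a), SO a, SO (Suc a)]) F i"
    apply (simp only: semR_Cons semR_Nil)
    apply (simp add: iq i[unfolded iq] P tO_app[OF a(1) a1(1)] tO_app[OF a1(3) a1(2)] sO_app[OF a(1) a1(1)] sO_app[OF a1(3) a1(2)]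
         swp3_1[OF lp a(1)] swp3_2[OF lp a(1)] nth3[OF lp a(1)])
    apply (cases x y z rule: ord3f)
    apply (simp_all add: defs3)
    apply (simp_all add: arith3)
    done
qed

definition mk2s :: "op \<Rightarrow> nat \<Rightarrow> (idx \<Rightarrow> K) \<Rightarrow> (idx \<Rightarrow> K) \<Rightarrow> bool" where
  "mk2s A a \<alpha> \<beta> \<longleftrightarrow> 1 \<le> a \<and> a < n \<and> (\<forall>F i. i \<in> Bs \<longrightarrow> semR Bs A F i = \<alpha> i * F i + \<beta> i * F (swp i a))"

definition lop :: "op \<Rightarrow> nat \<Rightarrow> bool" where
  "lop A a \<longleftrightarrow> (\<exists>g h. mk2s A a (\<lambda>i. g (i!(a-1)) (i!a)) (\<lambda>i. h (i!(a-1)) (i!a)))"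

lemma lop_T: "1 \<le> a \<Longrightarrow> a < n \<Longrightarrow> lop (TO a) a"
  unfolding lop_def mk2s_def by (rule exI[of _ "cT k"], rule exI[of _ "eT k"]) (simp add: tO_app)
lemma lop_S: "1 \<le> a \<Longrightarrow> a < n \<Longrightarrow> lop (SO a) a"
  unfolding lop_def mk2s_def by (rule exI[of _ "cS k"], rule exI[of _ "eT k"]) (simp add: sO_app)
lemma lop_Ti: "1 \<le> a \<Longrightarrow> a < n \<Longrightarrow> lop (Ti a) a"
  unfolding lop_def mk2s_def by (rule exI[of _ "\<lambda>x y. cT k x y - tt"], rule exI[of _ "eT k"]) (simp add: Ti_app)

lemma swp_comm: "1 \<le> a \<Longrightarrow> a + 2 \<le> b \<Longrightarrow> swp (swp i a) b = swp (swp i b) a"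
  unfolding swp_def by (simp add: nth_list_update list_update_swap)

lemma far_aux:
  assumes A: "lop A a" and B: "lop B b" and ab: "a + 2 \<le> b"
  shows "qv [A, B] [B, A]"
proof -
  obtain g h where mA: "mk2s A a (\<lambda>i. g (i!(a-1)) (i!a)) (\<lambda>i. h (i!(a-1)) (i!a))"
    using A unfolding lop_def by blast
  obtain g' h' where mB: "mk2s B b (\<lambda>i. g' (i!(b-1)) (i!b)) (\<lambda>i. h' (i!(b-1)) (i!b))"
    using B unfolding lop_def by blast
  have a: "1 \<le> a" "a < n" and b: "1 \<le> b" "b < n" using mA mB by (auto simp: mk2s_def)
  have eA: "\<And>F i. i \<in> Bs \<Longrightarrow> semR Bs A F i = g (i!(a-1)) (i!a) * F i + h (i!(a-1)) (i!a) * F (swp i a)"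
    using mA by (simp add: mk2s_def)
  have eB: "\<And>F i. i \<in> Bs \<Longrightarrow> semR Bs B F i = g' (i!(b-1)) (i!b) * F i + h' (i!(b-1)) (i!b) * F (swp i b)"
    using mB by (simp add: mk2s_def)
  show ?thesis
  proof (rule qvI)
    fix F i assume i: "i \<in> Bs"
    have ia: "swp i a \<in> Bs" and ib: "swp i b \<in> Bs" using swpB[OF i] a b by auto
    have iab: "swp (swp i a) b \<in> Bs" using swpB[OF ia] b by auto
    have c: "swp (swp i a) b = swp (swp i b) a" using swp_comm[OF a(1) ab] .
    have n1: "(swp i b) ! (a - Suc 0) = i ! (a - Suc 0)" "(swp i b) ! a = i ! a"
      using ab a by (auto intro!: nth_swp_other)
    have n2: "(swp i a) ! (b - Suc 0) = i ! (b - Suc 0)" "(swp i a) ! b = i ! b"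
      using ab a by (auto intro!: nth_swp_other)
    show "semR Bs (ocomps Bs [A, B]) F i = semR Bs (ocomps Bs [B, A]) F i"
      apply (simp only: semR_Cons semR_Nil)
      using i ia ib iab
      apply (simp add: eA eB n1 n2 c)
      apply (simp add: algebra_simps)
      done
  qed
qed

lemma far: "lop A a \<Longrightarrow> lop B b \<Longrightarrow> a + 2 \<le> b \<or> b + 2 \<le> a \<Longrightarrow> qv [A, B] [B, A]"
  using far_aux qv_sym by blast

lemma Dg_mk:
  assumes mA: "mk2s A a \<alpha> \<beta>"
    and h1: "\<And>i. i \<in> Bs \<Longrightarrow> \<alpha> i \<noteq> 0 \<Longrightarrow> f i = g i"
    and h2: "\<And>i. i \<in> Bs \<Longrightarrow> \<beta> i \<noteq> 0 \<Longrightarrow> f (swp i a) = g i"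
  shows "qv [Dg f, A] [A, Dg g]"
proof (rule qvI)
  fix F i assume i: "i \<in> Bs"
  have a: "1 \<le> a" "a < n" using mA by (auto simp: mk2s_def)
  have ia: "swp i a \<in> Bs" using swpB[OF i] a by auto
  have eA: "\<And>F i. i \<in> Bs \<Longrightarrow> semR Bs A F i = \<alpha> i * F i + \<beta> i * F (swp i a)"
    using mA by (simp add: mk2s_def)
  have e1: "\<alpha> i * (f i * F i) = g i * (\<alpha> i * F i)" using h1[OF i] by (cases "\<alpha> i = 0") auto
  have e2: "\<beta> i * (f (swp i a) * F (swp i a)) = g i * (\<beta> i * F (swp i a))" using h2[OF i] by (cases "\<beta> i = 0") auto
  have "semR Bs (ocomps Bs [Dg f, A]) F i = \<alpha> i * (f i * F i) + \<beta> i * (f (swp i a) * F (swp i a))"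
    apply (simp only: semR_Cons semR_Nil)
    using i ia by (simp add: eA Dg_app)
  also have "\<dots> = g i * (\<alpha> i * F i + \<beta> i * F (swp i a))" unfolding e1 e2 by (simp add: distrib_left)
  also have "\<dots> = semR Bs (ocomps Bs [A, Dg g]) F i"
    apply (simp only: semR_Cons semR_Nil)
    using i ia by (simp add: eA Dg_app)
  finally show "semR Bs (ocomps Bs [Dg f, A]) F i = semR Bs (ocomps Bs [A, Dg g]) F i" .
qed

lemma Dg_cong: "(\<And>i. i \<in> Bs \<Longrightarrow> f i = g i) \<Longrightarrow> qv [Dg f] [Dg g]"
  by (rule qvI) (simp only: semR_Cons semR_Nil, simp add: Dg_app)

lemma Dg_mult: "qv [Dg f, Dg g] [Dg (\<lambda>i. f i * g i)]"
  by (rule qvI) (simp only: semR_Cons semR_Nil, simp add: Dg_app)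

lemma Dg_comm: "qv [Dg f, Dg g] [Dg g, Dg f]"
  by (rule qvI) (simp only: semR_Cons semR_Nil, simp add: Dg_app)

lemma qv_Cons: "qv L1 L2 \<Longrightarrow> qv (a # L1) (a # L2)"
  using qv_appL[of L1 L2 "[a]"] by simp

lemma comm_list: "(\<And>x. x \<in> set L \<Longrightarrow> qv [a, x] [x, a]) \<Longrightarrow> qv (a # L) (L @ [a])"
proof (induction L)
  case Nil then show ?case by simp
next
  case (Cons x L)
  have "qv (a # x # L) (x # a # L)" using qv_appR[OF Cons.prems[of x], of L] by simp
  also have "qv (x # a # L) (x # (L @ [a]))" using Cons by (intro qv_Cons) auto
  finally show ?case by simp
qed

lemma comm_list': "(\<And>x. x \<in> set L \<Longrightarrow> qv [a, x] [x, a]) \<Longrightarrow> qv (L @ [a]) (a # L)"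
  using comm_list qv_sym by blast

lemma qv_rep: "qv C D \<Longrightarrow> A @ C @ E = X \<Longrightarrow> A @ D @ E = Y \<Longrightarrow> qv X Y"
  using qv_mid by blast

lemma qv_cancel: "qv C [] \<Longrightarrow> A @ C @ E = X \<Longrightarrow> A @ E = Y \<Longrightarrow> qv X Y"
  using qv_mid[of C "[]" A E] by simp

definition thL :: "nat \<Rightarrow> op list" where "thL j = map (\<lambda>a. SO a) (rev [1..<j])"
definition XL :: "nat \<Rightarrow> op list" where "XL j = map Ti [1..<j]"

lemma upt_split3: "1 \<le> a \<Longrightarrow> Suc a < j \<Longrightarrow> [1..<j] = [1..<a] @ a # Suc a # [Suc (Suc a)..<j]"
proof -
  assume h: "1 \<le> a" "Suc a < j"
  have "[1..<j] = [1..<a] @ [a..<j]" using upt_add_eq_append[of 1 a "j - a"] h by simp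
  also have "[a..<j] = a # Suc a # [Suc (Suc a)..<j]" using h by (simp add: upt_conv_Cons)
  finally show ?thesis .
qed

lemma thL_Suc: "1 \<le> j \<Longrightarrow> thL (Suc j) = SO j # thL j"
  by (simp add: thL_def)
lemma XL_Suc: "1 \<le> j \<Longrightarrow> XL (Suc j) = XL j @ [Ti j]"
  by (simp add: XL_def)

lemma farTS: "1 \<le> a \<Longrightarrow> a < n \<Longrightarrow> 1 \<le> b \<Longrightarrow> b < n \<Longrightarrow> a + 2 \<le> b \<or> b + 2 \<le> a \<Longrightarrow> qv [TO a, SO b] [SO b, TO a]"
  by (rule far[OF lop_T lop_S])
lemma farTiS: "1 \<le> a \<Longrightarrow> a < n \<Longrightarrow> 1 \<le> b \<Longrightarrow> b < n \<Longrightarrow> a + 2 \<le> b \<or> b + 2 \<le> a \<Longrightarrow> qv [Ti a, SO b] [SO b, Ti a]"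
  by (rule far[OF lop_Ti lop_S])
lemma farSS: "1 \<le> a \<Longrightarrow> a < n \<Longrightarrow> 1 \<le> b \<Longrightarrow> b < n \<Longrightarrow> a + 2 \<le> b \<or> b + 2 \<le> a \<Longrightarrow> qv [SO a, SO b] [SO b, SO a]"
  by (rule far[OF lop_S lop_S])
lemma farTTi: "1 \<le> a \<Longrightarrow> a < n \<Longrightarrow> 1 \<le> b \<Longrightarrow> b < n \<Longrightarrow> a + 2 \<le> b \<or> b + 2 \<le> a \<Longrightarrow> qv [TO a, Ti b] [Ti b, TO a]"
  by (rule far[OF lop_T lop_Ti])
lemma farTiTi: "1 \<le> a \<Longrightarrow> a < n \<Longrightarrow> 1 \<le> b \<Longrightarrow> b < n \<Longrightarrow> a + 2 \<le> b \<or> b + 2 \<le> a \<Longrightarrow> qv [Ti a, Ti b] [Ti b, Ti a]"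
  by (rule far[OF lop_Ti lop_Ti])
lemma farTT: "1 \<le> a \<Longrightarrow> a < n \<Longrightarrow> 1 \<le> b \<Longrightarrow> b < n \<Longrightarrow> a + 2 \<le> b \<or> b + 2 \<le> a \<Longrightarrow> qv [TO a, TO b] [TO b, TO a]"
  by (rule far[OF lop_T lop_T])

lemma cancelT:
  assumes "1 \<le> a" "Suc a < n"
  shows "qv [TO (Suc a), TO a, Ti a, Ti (Suc a)] []"
proof -
  have "qv [TO (Suc a), TO a, Ti a, Ti (Suc a)] [TO (Suc a), Ti (Suc a)]"
    by (rule qv_cancel[OF inv2[of a], of "[TO (Suc a)]" "[Ti (Suc a)]"]) (use assms in auto)
  also have "qv [TO (Suc a), Ti (Suc a)] []" using inv2[of "Suc a"] assms by simp
  finally show ?thesis .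
qed

lemma cancelTi:
  assumes "1 \<le> a" "Suc a < n"
  shows "qv [Ti a, Ti (Suc a), TO (Suc a), TO a] []"
proof -
  have "qv [Ti a, Ti (Suc a), TO (Suc a), TO a] [Ti a, TO a]"
    by (rule qv_cancel[OF inv1[of "Suc a"], of "[Ti a]" "[TO a]"]) (use assms in auto)
  also have "qv [Ti a, TO a] []" using inv1[of a] assms by simp
  finally show ?thesis .
qed

lemma TiShift:
  assumes a: "1 \<le> a" "Suc a < n"
  shows "qv [TO (Suc a), Ti a, Ti (Suc a)] [Ti a, Ti (Suc a), TO a]"
proof -
  have "qv [TO (Suc a), Ti a, Ti (Suc a)] ([Ti a, Ti (Suc a), TO (Suc a), TO a] @ [TO (Suc a), Ti a, Ti (Suc a)])"
    by (rule qv_rep[OF qv_sym[OF cancelTi[OF a]], of "[]" "[TO (Suc a), Ti a, Ti (Suc a)]"]) simp_all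
  also have "qv \<dots> ([Ti a, Ti (Suc a)] @ [TO a, TO (Suc a), TO a] @ [Ti a, Ti (Suc a)])"
    by (rule qv_rep[OF qv_sym[OF braidT[OF a]], of "[Ti a, Ti (Suc a)]" "[Ti a, Ti (Suc a)]"]) simp_all
  also have "qv \<dots> [Ti a, Ti (Suc a), TO a]"
    by (rule qv_cancel[OF cancelT[OF a], of "[Ti a, Ti (Suc a), TO a]" "[]"]) simp_all
  finally show ?thesis .
qed

lemma TiBraid:
  assumes a: "1 \<le> a" "Suc a < n"
  shows "qv [Ti a, Ti (Suc a), Ti a] [Ti (Suc a), Ti a, Ti (Suc a)]"
proof -
  have i1: "\<And>c. 1 \<le> c \<Longrightarrow> c < n \<Longrightarrow> qv [Ti c, TO c] []" by (rule inv1)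
  have i2: "\<And>c. 1 \<le> c \<Longrightarrow> c < n \<Longrightarrow> qv [TO c, Ti c] []" by (rule inv2)
  have c1: "qv [TO (Suc a), TO a, TO (Suc a), Ti (Suc a), Ti a, Ti (Suc a)] []"
  proof -
    have "qv [TO (Suc a), TO a, TO (Suc a), Ti (Suc a), Ti a, Ti (Suc a)] [TO (Suc a), TO a, Ti a, Ti (Suc a)]"
      by (rule qv_cancel[OF i2[of "Suc a"], of "[TO (Suc a), TO a]" "[Ti a, Ti (Suc a)]"]) (use a in auto)
    also have "qv \<dots> []" by (rule cancelT[OF a])
    finally show ?thesis .
  qed
  have c2: "qv [Ti a, Ti (Suc a), Ti a, TO a, TO (Suc a), TO a] []"
  proof -
    have "qv [Ti a, Ti (Suc a), Ti a, TO a, TO (Suc a), TO a] [Ti a, Ti (Suc a), TO (Suc a), TO a]"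
      by (rule qv_cancel[OF i1[of a], of "[Ti a, Ti (Suc a)]" "[TO (Suc a), TO a]"]) (use a in auto)
    also have "qv \<dots> []" by (rule cancelTi[OF a])
    finally show ?thesis .
  qed
  have "qv [Ti a, Ti (Suc a), Ti a] ([Ti a, Ti (Suc a), Ti a] @ [TO (Suc a), TO a, TO (Suc a), Ti (Suc a), Ti a, Ti (Suc a)])"
    by (rule qv_rep[OF qv_sym[OF c1], of "[Ti a, Ti (Suc a), Ti a]" "[]"]) simp_all
  also have "qv \<dots> ([Ti a, Ti (Suc a), Ti a] @ [TO a, TO (Suc a), TO a] @ [Ti (Suc a), Ti a, Ti (Suc a)])"
    by (rule qv_rep[OF qv_sym[OF braidT[OF a]], of "[Ti a, Ti (Suc a), Ti a]" "[Ti (Suc a), Ti a, Ti (Suc a)]"]) simp_all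
  also have "qv \<dots> [Ti (Suc a), Ti a, Ti (Suc a)]"
    by (rule qv_cancel[OF c2, of "[]" "[Ti (Suc a), Ti a, Ti (Suc a)]"]) simp_all
  finally show ?thesis .
qed

lemma A_shift:
  assumes a: "1 \<le> a" "Suc a < j" "j \<le> n"
  shows "qv (TO a # thL j) (thL j @ [TO (Suc a)])"
proof -
  define L1 where "L1 = map (\<lambda>a. SO a) (rev [Suc (Suc a)..<j])"
  define L3 where "L3 = map (\<lambda>a. SO a) (rev [1..<a])"
  have th: "thL j = L1 @ [SO (Suc a), SO a] @ L3"
    unfolding thL_def L1_def L3_def using upt_split3[OF a(1) a(2)] by simp
  have "qv (TO a # L1) (L1 @ [TO a])"
    by (rule comm_list) (use a in \<open>auto simp: L1_def intro!: farTS\<close>)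
  then have "qv (TO a # thL j) (L1 @ [TO a, SO (Suc a), SO a] @ L3)"
    using qv_appR[of "TO a # L1" "L1 @ [TO a]" "[SO (Suc a), SO a] @ L3"] th by simp
  also have "qv \<dots> (L1 @ [SO (Suc a), SO a, TO (Suc a)] @ L3)"
    by (rule qv_mid[OF L7]) (use a in auto)
  also have "qv \<dots> (L1 @ [SO (Suc a), SO a] @ L3 @ [TO (Suc a)])"
  proof -
    have "qv (TO (Suc a) # L3) (L3 @ [TO (Suc a)])"
      by (rule comm_list) (use a in \<open>auto simp: L3_def intro!: farTS\<close>)
    then show ?thesis using qv_appL[of _ _ "L1 @ [SO (Suc a), SO a]"] by simp
  qed
  finally show ?thesis using th by simp
qed

lemma Ainv_shift:
  assumes a: "1 \<le> a" "Suc a < j" "j \<le> n"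
  shows "qv (Ti a # thL j) (thL j @ [Ti (Suc a)])"
proof -
  have "qv (Ti a # thL j) (Ti a # thL j @ [TO (Suc a), Ti (Suc a)])"
    by (rule qv_rep[OF qv_sym[OF inv2[of "Suc a"]], of "Ti a # thL j" "[]"]) (use a in auto)
  also have "qv \<dots> ([Ti a] @ (TO a # thL j) @ [Ti (Suc a)])"
    by (rule qv_rep[OF qv_sym[OF A_shift[OF a]], of "[Ti a]" "[Ti (Suc a)]"]) simp_all
  also have "qv \<dots> (thL j @ [Ti (Suc a)])"
    by (rule qv_cancel[OF inv1[of a], of "[]" "thL j @ [Ti (Suc a)]"]) (use a in auto)
  finally show ?thesis .
qed

lemma T0comm_X:
  assumes a: "1 \<le> a" "Suc a < n"
  shows "qv (TO (Suc a) # XL n) (XL n @ [TO a])"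
proof -
  define L1 where "L1 = map Ti [1..<a]"
  define L3 where "L3 = map Ti [Suc (Suc a)..<n]"
  have xl: "XL n = L1 @ [Ti a, Ti (Suc a)] @ L3"
    unfolding XL_def L1_def L3_def using upt_split3[OF a(1) a(2)] by simp
  have "qv (TO (Suc a) # L1) (L1 @ [TO (Suc a)])"
    by (rule comm_list) (use a in \<open>auto simp: L1_def intro!: farTTi\<close>)
  then have "qv (TO (Suc a) # XL n) (L1 @ [TO (Suc a), Ti a, Ti (Suc a)] @ L3)"
    using qv_appR[of "TO (Suc a) # L1" "L1 @ [TO (Suc a)]" "[Ti a, Ti (Suc a)] @ L3"] xl by simp
  also have "qv \<dots> (L1 @ [Ti a, Ti (Suc a), TO a] @ L3)"
    by (rule qv_mid[OF TiShift[OF a]])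
  also have "qv \<dots> (L1 @ [Ti a, Ti (Suc a)] @ L3 @ [TO a])"
  proof -
    have "qv (TO a # L3) (L3 @ [TO a])"
      by (rule comm_list) (use a in \<open>auto simp: L3_def intro!: farTTi\<close>)
    then show ?thesis using qv_appL[of _ _ "L1 @ [Ti a, Ti (Suc a)]"] by simp
  qed
  finally show ?thesis using xl by simp
qed

lemma S0_Dg: "S0_op = Dg (\<lambda>i. QQ (fst (i!0)))"
  by (rule ext)+ (simp add: S0_op_def Dg_def)

definition D2 :: op where "D2 = Dg (\<lambda>i. QQ (fst (i!1)))"

lemma lop_mk2s: "lop A b \<Longrightarrow> \<exists>\<alpha> \<beta>. mk2s A b \<alpha> \<beta>"
  unfolding lop_def by blast

lemma S0_comm:
  assumes A: "lop A b" and b: "2 \<le> b"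
  shows "qv [S0_op, A] [A, S0_op]"
proof -
  obtain \<alpha> \<beta> where m: "mk2s A b \<alpha> \<beta>" using lop_mk2s[OF A] by blast
  show ?thesis unfolding S0_Dg
    by (rule Dg_mk[OF m]) (use b in \<open>auto simp: nth_swp_other\<close>)
qed

lemma cS_neq0: "cS k x y \<noteq> 0 \<Longrightarrow> fst x = fst y"
  by (auto simp: cS_def cs_def split: if_splits)

lemma S0_S1:
  assumes n2: "2 \<le> n"
  shows "qv [S0_op, SO 1] [SO 1, D2]"
proof -
  have m: "mk2s (SO 1) 1 (\<lambda>i. cS k (i!(1-1)) (i!1)) (\<lambda>i. eT k (i!(1-1)) (i!1))"
    unfolding mk2s_def using n2 by (simp add: sO_app)
  show ?thesis unfolding S0_Dg D2_def
  proof (rule Dg_mk[OF m])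
    fix i assume "i \<in> Bs" "cS k (i ! (1 - 1)) (i ! 1) \<noteq> 0"
    then show "QQ (fst (i ! 0)) = QQ (fst (i ! 1))" using cS_neq0 by auto
  next
    fix i assume i: "i \<in> Bs"
    have l: "length i = n" using lenB[OF i] .
    show "QQ (fst (swp i 1 ! 0)) = QQ (fst (i ! 1))"
      using l n2 by (simp add: swp_def nth_list_update)
  qed
qed

lemma S0_thL:
  assumes j: "2 \<le> j" "j \<le> n"
  shows "qv (S0_op # thL j) (thL j @ [D2])"
proof -
  define L1 where "L1 = map (\<lambda>a. SO a) (rev [2..<j])"
  have th: "thL j = L1 @ [SO 1]"
    unfolding thL_def L1_def using j upt_rec[of 1 j] by (simp add: upt_conv_Cons numeral_2_eq_2)
  have "qv (S0_op # L1) (L1 @ [S0_op])"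
    by (rule comm_list) (use j in \<open>auto simp: L1_def intro!: S0_comm lop_S\<close>)
  then have "qv (S0_op # thL j) (L1 @ [S0_op, SO 1])"
    using qv_appR[of "S0_op # L1" "L1 @ [S0_op]" "[SO 1]"] th by simp
  also have "qv \<dots> (L1 @ [SO 1, D2])"
    by (rule qv_appL[OF S0_S1]) (use j in auto)
  finally show ?thesis using th by simp
qed

lemma D2S0_T1:
  assumes n2: "2 \<le> n"
  shows "qv [D2, S0_op, TO 1] [TO 1, D2, S0_op]"
proof -
  define h where "h = (\<lambda>i::idx. QQ (fst (i!1)) * QQ (fst (i!0)))"
  have m: "mk2s (TO 1) 1 (\<lambda>i. cT k (i!(1-1)) (i!1)) (\<lambda>i. eT k (i!(1-1)) (i!1))"
    unfolding mk2s_def using n2 by (simp add: tO_app)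
  have e: "qv [D2, S0_op] [Dg h]" unfolding D2_def S0_Dg h_def by (rule Dg_mult)
  have "qv [D2, S0_op, TO 1] [Dg h, TO 1]" using qv_appR[OF e, of "[TO 1]"] by simp
  also have "qv \<dots> [TO 1, Dg h]"
  proof (rule Dg_mk[OF m])
    fix i assume i: "i \<in> Bs"
    have l: "length i = n" using lenB[OF i] .
    show "h (swp i 1) = h i"
      using l n2 by (simp add: swp_def nth_list_update h_def)
  qed simp
  also have "qv \<dots> [TO 1, D2, S0_op]" using qv_appL[OF qv_sym[OF e], of "[TO 1]"] by simp
  finally show ?thesis .
qed

lemma thth:
  assumes j: "2 \<le> j" "j \<le> n"
  shows "qv (thL j @ thL j @ [TO 1]) (TO (j - 1) # thL j @ thL j)"
  using j
proof (induction j rule: dec_induct)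
  case base
  have t2: "thL 2 = [SO 1]" by (simp add: thL_def numeral_2_eq_2)
  show ?case unfolding t2 using qv_sym[OF L3[of 1]] base by simp
next
  case (step j)
  have j1: "1 \<le> j - 1" "Suc j \<le> n" "2 \<le> j" using step by auto
  define a where "a = j - 1"
  have ja: "j = Suc a" "1 \<le> a" "Suc (Suc a) \<le> n" using j1 by (auto simp: a_def)
  have thj: "thL j = SO a # thL a" using thL_Suc[of a] ja by simp
  have thSj: "thL (Suc j) = SO j # thL j" using thL_Suc[of j] ja by simp
  have K: "qv (thL j @ [SO j]) ([SO a, SO j] @ thL a)"
  proof -
    have "qv (thL a @ [SO j]) (SO j # thL a)"
      by (rule comm_list') (use ja in \<open>auto simp: thL_def intro!: farSS\<close>)
    then show ?thesis unfolding thj using qv_Cons[of _ _ "SO a"] by simp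
  qed
  have sq: "qv (thL (Suc j) @ thL (Suc j)) ([SO a, SO j] @ thL j @ thL j)"
  proof -
    have "qv (thL (Suc j) @ thL (Suc j)) ([SO j] @ (thL j @ [SO j]) @ thL j)"
      unfolding thSj by simp
    also have "qv \<dots> ([SO j] @ ([SO a, SO j] @ thL a) @ thL j)"
      by (rule qv_mid[OF K])
    also have "qv \<dots> ([SO a, SO j, SO a] @ thL a @ thL j)"
      using qv_appR[OF qv_sym[OF L9[of a]], of "thL a @ thL j"] ja by simp
    also have "qv \<dots> ([SO a, SO j] @ thL j @ thL j)"
      using thj by simp
    finally show ?thesis .
  qed
  have "qv (thL (Suc j) @ thL (Suc j) @ [TO 1]) ([SO a, SO j] @ (thL j @ thL j @ [TO 1]))"
    using qv_appR[OF sq, of "[TO 1]"] by simp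
  also have "qv \<dots> ([SO a, SO j] @ (TO (j - 1) # thL j @ thL j))"
    by (rule qv_appL[OF step.IH]) (use step in auto)
  also have "qv \<dots> ([TO j, SO a, SO j] @ thL j @ thL j)"
    using qv_appR[OF qv_sym[OF L8[of a]], of "thL j @ thL j"] ja by simp
  also have "qv \<dots> (TO (Suc j - 1) # thL (Suc j) @ thL (Suc j))"
    using qv_Cons[OF qv_sym[OF sq], of "TO j"] by simp
  finally show ?case .
qed

abbreviation "YL \<equiv> thL n @ [S0_op]"

lemma R2:
  assumes n2: "2 \<le> n"
  shows "qv (YL @ YL @ [TO 1]) (TO (n - 1) # YL @ YL)"
proof -
  have YY: "qv (YL @ YL) (thL n @ thL n @ [D2, S0_op])"
    using qv_mid[OF S0_thL[OF n2 order_refl], of "thL n" "[S0_op]"] by simp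
  have "qv (YL @ YL @ [TO 1]) (thL n @ thL n @ [D2, S0_op, TO 1])"
    using qv_appR[OF YY, of "[TO 1]"] by simp
  also have "qv \<dots> (thL n @ thL n @ [TO 1, D2, S0_op])"
    using qv_appL[OF D2S0_T1[OF n2], of "thL n @ thL n"] by simp
  also have "qv \<dots> (TO (n - 1) # thL n @ thL n @ [D2, S0_op])"
    using qv_appR[OF thth[OF n2 order_refl], of "[D2, S0_op]"] by simp
  also have "qv \<dots> (TO (n - 1) # YL @ YL)"
    using qv_Cons[OF qv_sym[OF YY], of "TO (n - 1)"] by simp
  finally show ?thesis .
qed

lemma semR_ocomp2: "semR Bs (ocomp Bs A B) = semR Bs (ocomps Bs [A, B])"
  by (simp add: semR_comp semR_id finB prj_semR comp_assoc)

lemma semR_single: "semR Bs (ocomps Bs [A]) = semR Bs A"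
  by (simp add: semR_comp semR_id finB prj_semR)

lemma oeq_ocomp_qv: "oeq Bs (ocomp Bs A B) (ocomp Bs C D) \<longleftrightarrow> qv [A, B] [C, D]"
  unfolding qv_def oeq_semR[OF finB] semR_ocomp2 ..

lemma oinv_Ti:
  assumes a: "1 \<le> a" "a < n"
  shows "oinv Bs (TO a) = Ti a"
  unfolding oinv_def
proof (rule the_equality)
  have "semR Bs (ocomp Bs (Ti a) (TO a)) = semR Bs op_id"
    using inv1[OF a] unfolding qv_def semR_ocomp2 by simp
  moreover have "semR Bs (ocomp Bs (TO a) (Ti a)) = semR Bs op_id"
    using inv2[OF a] unfolding qv_def semR_ocomp2 by simp
  ultimately show "(\<forall>i j. i \<notin> Bs \<or> j \<notin> Bs \<longrightarrow> Ti a i j = 0) \<and> oeq Bs (ocomp Bs (Ti a) (TO a)) op_id \<and> oeq Bs (ocomp Bs (TO a) (Ti a)) op_id"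
    by (simp add: oeq_semR[OF finB] Ti_def)
next
  fix S assume h: "(\<forall>i j. i \<notin> Bs \<or> j \<notin> Bs \<longrightarrow> S i j = 0) \<and> oeq Bs (ocomp Bs S (TO a)) op_id \<and> oeq Bs (ocomp Bs (TO a) S) op_id"
  have q1: "qv [S, TO a] []"
    using h unfolding qv_def oeq_semR[OF finB] semR_ocomp2 by simp
  have "qv [S] ([S, TO a] @ [Ti a])"
    by (rule qv_rep[OF qv_sym[OF inv2[OF a]], of "[S]" "[]"]) simp_all
  also have "qv \<dots> [Ti a]"
    by (rule qv_cancel[OF q1, of "[]" "[Ti a]"]) simp_all
  finally have "semR Bs S = semR Bs (Ti a)" unfolding qv_def semR_single .
  then have "oeq Bs S (Ti a)" using oeq_semR[OF finB] by simp
  then show "S = Ti a"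
    using h by (intro ext) (auto simp: oeq_def Ti_def)
qed

lemma T0_qv:
  assumes n1: "1 \<le> n"
  shows "qv [T0_op Bs n k] (XL n @ YL)"
proof -
  have m: "map (\<lambda>a. oinv Bs (T_op k a)) [1..<n] = XL n"
    unfolding XL_def by (rule map_cong) (auto simp: oinv_Ti)
  have t: "theta_op Bs n k = ocomps Bs (thL n)"
    unfolding theta_op_def thL_def by simp
  have "qv [T0_op Bs n k] (XL n @ [ocomps Bs (thL n), S0_op])"
    unfolding T0_op_def m t by (rule qv_single)
  also have "qv \<dots> (XL n @ thL n @ [S0_op])"
    using qv_mid[OF qv_single[of "thL n"], of "XL n" "[S0_op]"] by simp
  finally show ?thesis by simp
qed

lemma G4_0:
  assumes n1: "1 \<le> n" and b: "2 \<le> b" "b < n"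
  shows "qv [T0_op Bs n k, TO b] [TO b, T0_op Bs n k]"
proof -
  define a where "a = b - 1"
  have ab: "b = Suc a" "1 \<le> a" "Suc a < n" using b by (auto simp: a_def)
  have "qv [T0_op Bs n k, TO b] ((XL n @ YL) @ [TO b])"
    using qv_appR[OF T0_qv[OF n1], of "[TO b]"] by simp
  also have "qv \<dots> (XL n @ thL n @ [TO b, S0_op])"
    using qv_appL[OF S0_comm[OF lop_T[of b]], of "XL n @ thL n"] b by simp
  also have "qv \<dots> (XL n @ (TO a # thL n) @ [S0_op])"
    using qv_mid[OF qv_sym[OF A_shift[of a n]], of "XL n" "[S0_op]"] ab by simp
  also have "qv \<dots> ((TO b # XL n) @ thL n @ [S0_op])"
    using qv_appR[OF qv_sym[OF T0comm_X[of a]], of "thL n @ [S0_op]"] ab by simp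
  also have "qv \<dots> [TO b, T0_op Bs n k]"
    using qv_Cons[OF qv_sym[OF T0_qv[OF n1]], of "TO b"] by simp
  finally show ?thesis .
qed

lemma Yshift:
  assumes a: "1 \<le> a" "Suc a < n"
  shows "qv (YL @ [Ti (Suc a)]) (Ti a # YL)"
proof -
  have "qv (YL @ [Ti (Suc a)]) (thL n @ [Ti (Suc a), S0_op])"
    using qv_appL[OF S0_comm[OF lop_Ti[of "Suc a"]], of "thL n"] a by simp
  also have "qv \<dots> ((Ti a # thL n) @ [S0_op])"
    using qv_appR[OF qv_sym[OF Ainv_shift[of a n]], of "[S0_op]"] a by simp
  finally show ?thesis by simp
qed

lemma Ylist:
  "(\<And>b. b \<in> set bs \<Longrightarrow> 2 \<le> b \<and> b < n) \<Longrightarrow> qv (YL @ map Ti bs) (map (\<lambda>b. Ti (b - 1)) bs @ YL)"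
proof (induction bs)
  case Nil then show ?case by simp
next
  case (Cons b bs)
  have b: "2 \<le> b" "b < n" using Cons.prems by auto
  have "qv (YL @ map Ti (b # bs)) ((YL @ [Ti b]) @ map Ti bs)" by simp
  also have "qv \<dots> ((Ti (b - 1) # YL) @ map Ti bs)"
    using qv_appR[OF Yshift[of "b - 1"], of "map Ti bs"] b by simp
  also have "qv \<dots> (Ti (b - 1) # map (\<lambda>b. Ti (b - 1)) bs @ YL)"
    using qv_Cons[OF Cons.IH, of "Ti (b - 1)"] Cons.prems by simp
  finally show ?case by simp
qed

lemma map_shift: "map (\<lambda>b. Ti (b - 1)) [2..<n] = map Ti [1..<n - 1]"
proof -
  have "[2..<n] = map Suc [1..<n - 1]" by (cases n) (auto simp: map_Suc_upt numeral_2_eq_2)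
  then show ?thesis by simp
qed

lemma stepA:
  assumes n2: "2 \<le> n"
  shows "qv (YL @ [TO 1] @ XL n) (map Ti [1..<n - 1] @ YL)"
proof -
  have x: "XL n = Ti 1 # map Ti [2..<n]" unfolding XL_def using n2 by (simp add: upt_conv_Cons numeral_2_eq_2)
  have "qv (YL @ [TO 1] @ XL n) (YL @ map Ti [2..<n])"
    unfolding x by (rule qv_cancel[OF inv2[of 1], of YL "map Ti [2..<n]"]) (use n2 in auto)
  also have "qv \<dots> (map Ti [1..<n - 1] @ YL)"
    using Ylist[of "[2..<n]"] map_shift by simp
  finally show ?thesis .
qed

lemma shiftX:
  assumes a: "1 \<le> a" "Suc a < n"
  shows "qv (XL n @ [Ti a]) (Ti (Suc a) # XL n)"
proof -
  define L1 where "L1 = map Ti [1..<a]"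
  define L3 where "L3 = map Ti [Suc (Suc a)..<n]"
  have xl: "XL n = L1 @ [Ti a, Ti (Suc a)] @ L3"
    unfolding XL_def L1_def L3_def using upt_split3[OF a(1) a(2)] by simp
  have "qv (L3 @ [Ti a]) (Ti a # L3)"
    by (rule comm_list') (use a in \<open>auto simp: L3_def intro!: farTiTi\<close>)
  then have "qv (XL n @ [Ti a]) (L1 @ [Ti a, Ti (Suc a), Ti a] @ L3)"
    using qv_appL[of _ _ "L1 @ [Ti a, Ti (Suc a)]"] xl by simp
  also have "qv \<dots> (L1 @ [Ti (Suc a), Ti a, Ti (Suc a)] @ L3)"
    by (rule qv_mid[OF TiBraid[OF a]])
  also have "qv \<dots> (Ti (Suc a) # L1 @ [Ti a, Ti (Suc a)] @ L3)"
  proof -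
    have h: "qv (L1 @ [Ti (Suc a)]) (Ti (Suc a) # L1)"
      by (rule comm_list') (use a in \<open>auto simp: L1_def intro!: farTiTi\<close>)
    show ?thesis using qv_appR[OF h, of "[Ti a, Ti (Suc a)] @ L3"] by simp
  qed
  finally show ?thesis using xl by simp
qed

lemma shiftL:
  "j + 2 \<le> n \<Longrightarrow> qv (XL n @ map Ti [1..<Suc j]) (map Ti [2..<j + 2] @ XL n)"
proof (induction j)
  case 0 then show ?case by simp
next
  case (Suc j)
  have "qv (XL n @ map Ti [1..<Suc (Suc j)]) ((XL n @ map Ti [1..<Suc j]) @ [Ti (Suc j)])" by simp
  also have "qv \<dots> (map Ti [2..<j + 2] @ (XL n @ [Ti (Suc j)]))"
    using qv_appR[OF Suc.IH, of "[Ti (Suc j)]"] Suc.prems by simp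
  also have "qv \<dots> (map Ti [2..<j + 2] @ (Ti (Suc (Suc j)) # XL n))"
    by (rule qv_appL[OF shiftX]) (use Suc.prems in auto)
  also have "(map Ti [2..<j + 2] @ (Ti (Suc (Suc j)) # XL n)) = map Ti [2..<Suc j + 2] @ XL n" by simp
  finally show ?case .
qed

lemma BG:
  assumes n2: "2 \<le> n"
  shows "qv (XL n @ map Ti [1..<n - 1] @ [TO (n - 1)]) (TO 1 # XL n @ map Ti [1..<n - 1])"
proof -
  define c' where "c' = map Ti [1..<n - 1]"
  have cc: "qv (XL n @ c') (map Ti [2..<n] @ XL n)"
    using shiftL[of "n - 2"] n2 unfolding c'_def by (simp add: numeral_2_eq_2 Suc_diff_Suc)
  have x: "XL n = Ti 1 # map Ti [2..<n]" unfolding XL_def using n2 by (simp add: upt_conv_Cons numeral_2_eq_2)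
  have x2: "c' @ [Ti (n - 1)] = XL n"
  proof -
    have "[1..<n] = [1..<n-1] @ [n-1]" using n2 by (cases n) auto
    then show ?thesis unfolding c'_def XL_def by simp
  qed
  have key: "qv (Ti 1 # XL n @ c') (XL n @ c' @ [Ti (n - 1)])"
  proof -
    have "qv (Ti 1 # XL n @ c') (Ti 1 # map Ti [2..<n] @ XL n)" by (rule qv_Cons[OF cc])
    also have "(Ti 1 # map Ti [2..<n] @ XL n) = XL n @ c' @ [Ti (n - 1)]" using x x2 by simp
    finally show ?thesis .
  qed
  have "qv (XL n @ c' @ [TO (n - 1)]) ([TO 1, Ti 1] @ XL n @ c' @ [TO (n - 1)])"
    by (rule qv_rep[OF qv_sym[OF inv2[of 1]], of "[]" "XL n @ c' @ [TO (n - 1)]"]) (use n2 in auto)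
  also have "qv \<dots> ([TO 1] @ (XL n @ c' @ [Ti (n - 1)]) @ [TO (n - 1)])"
    using qv_mid[OF key, of "[TO 1]" "[TO (n - 1)]"] by simp
  also have "qv \<dots> (TO 1 # XL n @ c')"
    by (rule qv_cancel[OF inv1[of "n - 1"], of "TO 1 # XL n @ c'" "[]"]) (use n2 in auto)
  finally show ?thesis unfolding c'_def .
qed

lemma G2:
  assumes n2: "2 \<le> n"
  shows "qv [T0_op Bs n k, TO 1, T0_op Bs n k, TO 1] [TO 1, T0_op Bs n k, TO 1, T0_op Bs n k]"
proof -
  define c' where "c' = map Ti [1..<n - 1]"
  have n1: "1 \<le> n" using n2 by simp
  have sA: "qv (YL @ [TO 1] @ XL n) (c' @ YL)" using stepA[OF n2] unfolding c'_def .
  have "qv [T0_op Bs n k, TO 1, T0_op Bs n k, TO 1] ((XL n @ YL) @ [TO 1] @ (XL n @ YL) @ [TO 1])"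
    using qv_app[OF T0_qv[OF n1] qv_app[OF qv_refl[of "[TO 1]"] qv_app[OF T0_qv[OF n1] qv_refl[of "[TO 1]"]]]] by simp
  also have "qv \<dots> (XL n @ (c' @ YL) @ YL @ [TO 1])"
    using qv_mid[OF sA, of "XL n" "YL @ [TO 1]"] by simp
  also have "qv \<dots> (XL n @ c' @ (TO (n - 1) # YL @ YL))"
    using qv_appL[OF R2[OF n2], of "XL n @ c'"] by simp
  also have "qv \<dots> ((TO 1 # XL n @ c') @ YL @ YL)"
    using qv_appR[OF BG[OF n2], of "YL @ YL"] unfolding c'_def by simp
  also have "qv \<dots> ([TO 1] @ XL n @ (YL @ [TO 1] @ XL n) @ YL)"
    using qv_mid[OF qv_sym[OF sA], of "TO 1 # XL n" YL] by simp
  also have "qv \<dots> [TO 1, T0_op Bs n k, TO 1, T0_op Bs n k]"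
    using qv_app[OF qv_refl[of "[TO 1]"] qv_app[OF qv_sym[OF T0_qv[OF n1]] qv_app[OF qv_refl[of "[TO 1]"] qv_sym[OF T0_qv[OF n1]]]]] by simp
  finally show ?thesis .
qed

definition rotl :: "nat \<Rightarrow> idx \<Rightarrow> idx" where
  "rotl j i = fold (\<lambda>a r. swp r a) [1..<j] i"

lemma rotl_Suc: "1 \<le> j \<Longrightarrow> rotl (Suc j) i = swp (rotl j i) j"
  by (simp add: rotl_def)

lemma length_swp[simp]: "length (swp i a) = length i"
  by (simp add: swp_def)

lemma rotl_form:
  assumes "1 \<le> j" "j \<le> length i"
  shows "rotl j i = take (j - 1) (tl i) @ i ! 0 # drop j i"
  using assms
proof (induction j rule: dec_induct)
  case base
  have "i \<noteq> []" using base by auto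
  then show ?case by (simp add: rotl_def hd_conv_nth[symmetric] drop_Suc)
next
  case (step j)
  have dj: "drop j i = i ! j # drop (Suc j) i" using step by (simp add: Cons_nth_drop_Suc)
  have tk: "take j (tl i) = take (j - 1) (tl i) @ [i ! j]"
  proof -
    have "take (Suc (j - 1)) (tl i) = take (j - 1) (tl i) @ [tl i ! (j - 1)]"
      using step by (intro take_Suc_conv_app_nth) auto
    moreover have "tl i ! (j - 1) = i ! j" using step by (simp add: nth_tl)
    ultimately show ?thesis using step by simp
  qed
  have l: "length (take (j - 1) (tl i)) = j - 1" using step by simp
  have "rotl (Suc j) i = swp (take (j - 1) (tl i) @ i ! 0 # i ! j # drop (Suc j) i) j"
    using step dj by (simp add: rotl_Suc)
  also have "\<dots> = take (j - 1) (tl i) @ i ! j # i ! 0 # drop (Suc j) i"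
    using swp_at[OF l] step by simp
  also have "\<dots> = take (Suc j - 1) (tl i) @ i ! 0 # drop (Suc j) i" using tk by simp
  finally show ?case .
qed

lemma rotl_nth:
  assumes "1 \<le> j" "j < length i"
  shows "rotl j i ! (j - 1) = i ! 0" "rotl j i ! j = i ! j"
proof -
  have l: "length (take (j - 1) (tl i)) = j - 1" using assms by simp
  show "rotl j i ! (j - 1) = i ! 0" using assms l by (simp add: rotl_form nth_append)
  have nj: "\<not> j < j - Suc 0" by simp
  have jj: "j - (j - Suc 0) = Suc 0" using assms by simp
  show "rotl j i ! j = i ! j" using assms l nj jj by (simp add: rotl_form nth_append)
qed

lemma rotl_nth0:
  assumes "2 \<le> j" "j \<le> length i"
  shows "rotl j i ! 0 = i ! 1"
proof -
  have l: "length (take (j - 1) (tl i)) = j - 1" using assms by simp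
  show ?thesis using assms l by (simp add: rotl_form nth_append nth_tl)
qed

lemma length_fold_swp: "length (fold (\<lambda>a r. swp r a) xs i) = length i"
  by (induction xs arbitrary: i) auto

lemma length_rotl: "length (rotl j i) = length i"
  unfolding rotl_def by (rule length_fold_swp)

definition colonly :: "(idx \<Rightarrow> K) \<Rightarrow> bool" where
  "colonly f \<longleftrightarrow> (\<forall>i\<in>Bs. \<forall>i'\<in>Bs. map fst i = map fst i' \<longrightarrow> f i = f i')"

lemma nth_swp: "1 \<le> a \<Longrightarrow> a < length i \<Longrightarrow> swp i a ! p = (if p = a then i!(a-1) else if p = a-1 then i!a else i!p)"
  unfolding swp_def by (auto simp: nth_list_update)

lemma map_fst_swp_same: "1 \<le> a \<Longrightarrow> a < length i \<Longrightarrow> fst (i!(a-1)) = fst (i!a) \<Longrightarrow> map fst (swp i a) = map fst i"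
  by (rule nth_equalityI) (auto simp: nth_swp)

lemma map_fst_swp_cong: "map fst i = map fst i' \<Longrightarrow> a < length i \<Longrightarrow> map fst (swp i a) = map fst (swp i' a)"
proof -
  assume e: "map fst i = map fst i'" and a: "a < length i"
  have l: "length i = length i'" using e by (metis length_map)
  have f: "\<And>p. p < length i \<Longrightarrow> fst (i!p) = fst (i'!p)" using e l by (metis nth_map)
  show ?thesis unfolding swp_def using a l f
    by (intro nth_equalityI) (auto simp: nth_list_update)
qed

lemma colonly_swp: "colonly f \<Longrightarrow> 1 \<le> a \<Longrightarrow> a < n \<Longrightarrow> colonly (\<lambda>i. f (swp i a))"
  unfolding colonly_def
proof (intro ballI impI)
  fix i i' assume f: "\<forall>i\<in>Bs. \<forall>i'\<in>Bs. map fst i = map fst i' \<longrightarrow> f i = f i'" and a: "1 \<le> a" "a < n"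
    and i: "i \<in> Bs" "i' \<in> Bs" and e: "map fst i = map fst i'"
  have "map fst (swp i a) = map fst (swp i' a)" using map_fst_swp_cong[OF e] a lenB[OF i(1)] by simp
  then show "f (swp i a) = f (swp i' a)" using f swpB[OF i(1) a] swpB[OF i(2) a] by blast
qed

lemma DgS:
  assumes f: "colonly f" and a: "1 \<le> a" "a < n"
  shows "qv [Dg f, SO a] [SO a, Dg (\<lambda>i. f (swp i a))]"
proof -
  have m: "mk2s (SO a) a (\<lambda>i. cS k (i!(a-1)) (i!a)) (\<lambda>i. eT k (i!(a-1)) (i!a))"
    unfolding mk2s_def using a by (simp add: sO_app)
  show ?thesis
  proof (rule Dg_mk[OF m])
    fix i assume i: "i \<in> Bs" and c: "cS k (i ! (a - 1)) (i ! a) \<noteq> 0"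
    have "map fst (swp i a) = map fst i" using cS_neq0[OF c] a lenB[OF i] by (intro map_fst_swp_same) auto
    then show "f i = f (swp i a)" using f i swpB[OF i a] unfolding colonly_def by metis
  qed simp
qed

lemma Dg_thL:
  assumes "1 \<le> j" "j \<le> n"
  shows "colonly f \<Longrightarrow> qv (Dg f # thL j) (thL j @ [Dg (\<lambda>i. f (rotl j i))])"
  using assms
proof (induction j arbitrary: f rule: dec_induct)
  case base
  have "thL 1 = []" by (simp add: thL_def)
  moreover have "qv [Dg f] [Dg (\<lambda>i. f (rotl 1 i))]" by (rule Dg_cong) (simp add: rotl_def)
  ultimately show ?case by simp
next
  case (step j)
  have j: "1 \<le> j" "j < n" using step by auto
  have "qv (Dg f # thL (Suc j)) ([SO j, Dg (\<lambda>i. f (swp i j))] @ thL j)"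
    using qv_appR[OF DgS[OF step.prems(1) j], of "thL j"] thL_Suc[OF j(1)] by simp
  also have "qv \<dots> ([SO j] @ thL j @ [Dg (\<lambda>i. f (swp (rotl j i) j))])"
    using qv_Cons[OF step.IH[OF colonly_swp[OF step.prems(1) j]], of "SO j"] step by simp
  also have "qv \<dots> (thL (Suc j) @ [Dg (\<lambda>i. f (rotl (Suc j) i))])"
    using thL_Suc[OF j(1)] rotl_Suc[OF j(1)] by simp
  finally show ?case .
qed

definition Pi :: "nat \<Rightarrow> op" where
  "Pi j = Dg (\<lambda>i. if fst (i!0) < fst (i!j) then 1 else 0)"

lemma Pd_thL:
  assumes j: "1 \<le> j" "j < n"
  shows "qv (Pd j # thL j) (thL j @ [Pi j])"
proof -
  have c: "colonly (\<lambda>i. if fst (i!(j-1)) < fst (i!j) then 1 else 0)"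
    unfolding colonly_def
  proof (intro ballI impI)
    fix i i' assume i: "i \<in> Bs" "i' \<in> Bs" and e: "map fst i = map fst i'"
    have "fst (i!(j-1)) = fst (i'!(j-1))" "fst (i!j) = fst (i'!j)"
      using e lenB[OF i(1)] lenB[OF i(2)] j by (metis diff_le_self le_less_trans nth_map)+
    then show "(if fst (i!(j-1)) < fst (i!j) then 1 else 0) = (if fst (i'!(j-1)) < fst (i'!j) then (1::K) else 0)" by simp
  qed
  have "qv (Pd j # thL j) (thL j @ [Dg (\<lambda>i. if fst (rotl j i!(j-1)) < fst (rotl j i!j) then 1 else 0)])"
    unfolding Pd_def by (rule Dg_thL[OF j(1) _ c]) (use j in simp)
  also have "qv \<dots> (thL j @ [Pi j])"
    unfolding Pi_def
  proof (rule qv_appL, rule Dg_cong)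
    fix i assume i: "i \<in> Bs"
    have l: "j < length i" using lenB[OF i] j by simp
    show "(if fst (rotl j i!(j-1)) < fst (rotl j i!j) then 1 else 0) = (if fst (i!0) < fst (i!j) then (1::K) else 0)"
      using rotl_nth[OF j(1) l] by simp
  qed
  finally show ?thesis .
qed

lemma semR_lin: "semR Bs A (\<lambda>r. G1 r + c * G2 r) i = semR Bs A G1 i + c * semR Bs A G2 i"
  unfolding semR_def act_def by (simp add: sum.distrib sum_distrib_left algebra_simps)

lemma semR_prj_app: "semR Bs A (prj Bs G) = semR Bs A G"
  using semR_prj[of Bs A] by (simp add: fun_eq_iff)

definition ZL :: "nat \<Rightarrow> op list" where "ZL j = XL j @ thL j"
definition WL :: "nat \<Rightarrow> op list" where "WL j = thL (Suc j) @ map Ti [2..<Suc j] @ [Pi j]"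

lemma Xshift_list:
  "(\<And>b. b \<in> set bs \<Longrightarrow> 2 \<le> b \<and> b < j) \<Longrightarrow> j \<le> n \<Longrightarrow> qv (map (\<lambda>b. Ti (b - 1)) bs @ thL j) (thL j @ map Ti bs)"
proof (induction bs)
  case Nil then show ?case by simp
next
  case (Cons b bs)
  have b: "2 \<le> b" "b < j" using Cons.prems by auto
  have "qv (Ti (b - 1) # map (\<lambda>b. Ti (b - 1)) bs @ thL j) (Ti (b - 1) # thL j @ map Ti bs)"
    by (rule qv_Cons[OF Cons.IH]) (use Cons.prems in auto)
  also have "qv \<dots> ((thL j @ [Ti b]) @ map Ti bs)"
  proof -
    have e: "Suc (b - 1) = b" using b by simp
    have h: "qv (Ti (b - 1) # thL j) (thL j @ [Ti (Suc (b - 1))])"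
      by (rule Ainv_shift; insert b Cons.prems(2); simp)
    show ?thesis using qv_appR[OF h[unfolded e], of "map Ti bs"] by simp
  qed
  finally show ?case by simp
qed

lemma Z_rec:
  assumes j: "1 \<le> j" "Suc j \<le> n" and i: "i \<in> Bs"
  shows "semR Bs (ocomps Bs (ZL (Suc j))) F i = semR Bs (ocomps Bs (ZL j)) F i - tt * semR Bs (ocomps Bs (WL j)) F i"
proof -
  have j': "j < n" using j by simp
  define G where "G = semR Bs (ocomps Bs (XL j)) F"
  have zs: "ZL (Suc j) = XL j @ [Ti j, SO j] @ thL j"
    unfolding ZL_def using XL_Suc[OF j(1)] thL_Suc[OF j(1)] by simp
  have mid: "semR Bs (ocomps Bs [Ti j, SO j]) G = (\<lambda>r. prj Bs G r + (- tt) * semR Bs (ocomps Bs [SO j, Pd j]) G r)"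
  proof (rule ext)
    fix r show "semR Bs (ocomps Bs [Ti j, SO j]) G r = prj Bs G r + (- tt) * semR Bs (ocomps Bs [SO j, Pd j]) G r"
      by (cases "r \<in> Bs") (simp_all only: semR_Cons semR_Nil, simp_all add: F8_sem[OF j(1) j'] prj_def)
  qed
  have "semR Bs (ocomps Bs (ZL (Suc j))) F i = semR Bs (ocomps Bs (thL j)) (semR Bs (ocomps Bs [Ti j, SO j]) G) i"
    unfolding zs semR_app G_def by simp
  also have "\<dots> = semR Bs (ocomps Bs (thL j)) G i + (- tt) * semR Bs (ocomps Bs (thL j)) (semR Bs (ocomps Bs [SO j, Pd j]) G) i"
    unfolding mid semR_lin semR_prj_app ..
  also have "semR Bs (ocomps Bs (thL j)) G i = semR Bs (ocomps Bs (ZL j)) F i"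
    unfolding ZL_def semR_app G_def ..
  also have "semR Bs (ocomps Bs (thL j)) (semR Bs (ocomps Bs [SO j, Pd j]) G) i = semR Bs (ocomps Bs (XL j @ [SO j, Pd j] @ thL j)) F i"
    unfolding semR_app G_def by simp
  also have "semR Bs (ocomps Bs (XL j @ [SO j, Pd j] @ thL j)) = semR Bs (ocomps Bs (WL j))"
  proof -
    have "qv (XL j @ [SO j, Pd j] @ thL j) (XL j @ [SO j] @ thL j @ [Pi j])"
      using qv_mid[OF Pd_thL[OF j(1) j'], of "XL j @ [SO j]" "[]"] by simp
    also have "qv \<dots> ((XL j @ thL (Suc j)) @ [Pi j])" using thL_Suc[OF j(1)] by simp
    also have "qv \<dots> ((thL (Suc j) @ map Ti [2..<Suc j]) @ [Pi j])"
    proof -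
      have u: "[2..<Suc j] = map Suc [1..<j]" by (simp add: map_Suc_upt numeral_2_eq_2)
      have "map (\<lambda>b. Ti (b - 1)) [2..<Suc j] = XL j"
        unfolding XL_def u by (simp add: comp_def)
      moreover have "qv (map (\<lambda>b. Ti (b - 1)) [2..<Suc j] @ thL (Suc j)) (thL (Suc j) @ map Ti [2..<Suc j])"
        by (rule Xshift_list) (use j in auto)
      ultimately have "qv (XL j @ thL (Suc j)) (thL (Suc j) @ map Ti [2..<Suc j])" by simp
      then show ?thesis by (rule qv_appR)
    qed
    finally show ?thesis unfolding WL_def qv_def by simp
  qed
  finally show ?thesis by simp
qed


lemma entry_semR: "i \<in> Bs \<Longrightarrow> r \<in> Bs \<Longrightarrow> semR Bs A (\<lambda>s. if s = r then 1 else 0) i = A i r"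
proof -
  assume i: "i \<in> Bs" and r: "r \<in> Bs"
  have "(\<Sum>s\<in>Bs. A i s * (if s = r then 1 else 0)) = (\<Sum>s\<in>Bs. if s = r then A i s else 0)"
    by (rule sum.cong) auto
  then show ?thesis using i r finB by (simp add: semR_def act_def)
qed

lemma qv_entry: "qv L1 L2 \<Longrightarrow> i \<in> Bs \<Longrightarrow> r \<in> Bs \<Longrightarrow> ocomps Bs L1 i r = ocomps Bs L2 i r"
  using qv_oeq by (auto simp: oeq_def)

lemma sum_ne0: "(\<Sum>s\<in>Bs. f s) \<noteq> (0::K) \<Longrightarrow> \<exists>s\<in>Bs. f s \<noteq> 0"
proof (rule ccontr)
  assume h: "(\<Sum>s\<in>Bs. f s) \<noteq> 0" and "\<not> (\<exists>s\<in>Bs. f s \<noteq> 0)"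
  then have "\<forall>s\<in>Bs. f s = 0" by blast
  then have "(\<Sum>s\<in>Bs. f s) = 0" by simp
  then show False using h by simp
qed

lemma ocomps_Cons_supp:
  assumes h: "ocomps Bs (A # As) i r \<noteq> 0"
  shows "\<exists>s\<in>Bs. ocomps Bs As i s \<noteq> 0 \<and> A s r \<noteq> 0"
proof -
  have "ocomps Bs (A # As) i r = (\<Sum>s\<in>Bs. ocomps Bs As i s * A s r)" by (simp add: ocomp_def)
  then have "(\<Sum>s\<in>Bs. ocomps Bs As i s * A s r) \<noteq> 0" using h by simp
  then obtain s where "s \<in> Bs" "ocomps Bs As i s * A s r \<noteq> 0" using sum_ne0 by blast
  then show ?thesis by auto
qed

lemma ocomps_app_supp:
  assumes i: "i \<in> Bs" and r: "r \<in> Bs" and h: "ocomps Bs (xs @ ys) i r \<noteq> 0"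
  shows "\<exists>s\<in>Bs. ocomps Bs ys i s \<noteq> 0 \<and> ocomps Bs xs s r \<noteq> 0"
proof -
  have "semR Bs (ocomps Bs (xs @ ys)) = semR Bs (ocomp Bs (ocomps Bs xs) (ocomps Bs ys))"
    by (rule ext) (simp add: semR_app semR_comp)
  then have "oeq Bs (ocomps Bs (xs @ ys)) (ocomp Bs (ocomps Bs xs) (ocomps Bs ys))"
    using oeq_semR[OF finB] by simp
  then have "ocomp Bs (ocomps Bs xs) (ocomps Bs ys) i r \<noteq> 0" using h i r by (simp add: oeq_def)
  then show ?thesis unfolding ocomp_def by (rule sum_ne0[THEN bexE]) auto
qed

lemma supp_Nil: "ocomps Bs [] i r \<noteq> 0 \<Longrightarrow> r = i"
  by (simp add: op_id_def split: if_splits)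


lemma supp_S:
  assumes a: "1 \<le> a" "a < n" and s: "s \<in> Bs" and h: "SO a s r \<noteq> 0"
  shows "map fst r = map fst (swp s a)"
proof (cases "r = swp s a")
  case True then show ?thesis by simp
next
  case False
  then have "r = s" "cS k (s!(a-1)) (s!a) \<noteq> 0" using h by (auto simp: S_op_mk2 split: if_splits)
  moreover have "a < length s" using lenB[OF s] a by simp
  ultimately show ?thesis using map_fst_swp_same[of a s] cS_neq0 a by auto
qed

lemma supp_Ti:
  assumes h: "Ti b s r \<noteq> 0"
  shows "r = swp s b \<or> (r = s \<and> fst (s!b) \<le> fst (s!(b-1)))"
proof (cases "r = swp s b")
  case True then show ?thesis by simp
next
  case False
  then have rs: "r = s" and c: "cT k (s!(b-1)) (s!b) - tt \<noteq> 0" using h by (auto simp: Ti_def T_op_mk2 split: if_splits)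
  have "\<not> vless (s!(b-1)) (s!b)" using c by (auto simp: cT_def)
  then have "s!(b-1) = s!b \<or> vless (s!b) (s!(b-1))" using vless_lin by blast
  then show ?thesis using rs vless_fst[of "s!b" "s!(b-1)"] by auto
qed

lemma supp_single: "i \<in> Bs \<Longrightarrow> ocomps Bs [A] i r = A i r"
proof -
  assume i: "i \<in> Bs"
  have "ocomps Bs [A] i r = (\<Sum>s\<in>Bs. if s = i then A s r else 0)"
    by (simp add: ocomp_def op_id_def, rule sum.cong) auto
  then show ?thesis using finB i by simp
qed

lemma supp_Pi:
  assumes i: "i \<in> Bs" and h: "ocomps Bs [Pi j] i r \<noteq> 0"
  shows "r = i \<and> fst (i!0) < fst (i!j)"
  using h supp_single[OF i] by (auto simp: Pi_def Dg_def split: if_splits)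

lemma supp_thL:
  assumes j: "1 \<le> j" "j \<le> n"
  shows "i \<in> Bs \<Longrightarrow> r \<in> Bs \<Longrightarrow> ocomps Bs (thL j) i r \<noteq> 0 \<Longrightarrow> map fst r = map fst (rotl j i)"
  using j
proof (induction j arbitrary: r rule: dec_induct)
  case base
  have "thL 1 = []" by (simp add: thL_def)
  then show ?case using base by (simp add: rotl_def op_id_def split: if_splits)
next
  case (step j)
  have j: "1 \<le> j" "j < n" using step by auto
  obtain s where s: "s \<in> Bs" "ocomps Bs (thL j) i s \<noteq> 0" "SO j s r \<noteq> 0"
    using ocomps_Cons_supp[of "SO j" "thL j" i r] step.prems thL_Suc[OF j(1)] by auto
  have e1: "map fst s = map fst (rotl j i)" using step.IH[OF step.prems(1) s(1) s(2)] j by simp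
  have e2: "map fst r = map fst (swp s j)" by (rule supp_S[OF j s(1) s(3)])
  have "map fst (swp s j) = map fst (swp (rotl j i) j)"
    by (rule map_fst_swp_cong[OF e1]) (use lenB[OF s(1)] j in simp)
  then show ?case using e2 rotl_Suc[OF j(1)] by simp
qed

definition TriP :: "op \<Rightarrow> bool" where
  "TriP M \<longleftrightarrow> (\<forall>i\<in>Bs. \<forall>r\<in>Bs. (r = i \<longrightarrow> M i r = 1) \<and> (r \<noteq> i \<longrightarrow> M i r \<noteq> 0 \<longrightarrow> fst (i!0) < fst (r!0)))"


lemma supp_X:
  assumes j: "j < n" and i: "i \<in> Bs"
  shows "a + d = Suc j \<Longrightarrow> 2 \<le> a \<Longrightarrow> r \<in> Bs \<Longrightarrow> ocomps Bs (map Ti [a..<Suc j]) i r \<noteq> 0 \<Longrightarrow> fst (i!j) \<le> fst (r!(a-1))"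
proof (induction d arbitrary: a r)
  case 0
  then have "r = i" using supp_Nil by simp
  then show ?case using 0 by simp
next
  case (Suc d)
  have ua: "[a..<Suc j] = a # [Suc a..<Suc j]" using Suc.prems by (simp add: upt_conv_Cons del: upt_Suc)
  have h': "ocomps Bs (Ti a # map Ti [Suc a..<Suc j]) i r \<noteq> 0"
    using Suc.prems(4) unfolding ua list.map .
  obtain s where s: "s \<in> Bs" "ocomps Bs (map Ti [Suc a..<Suc j]) i s \<noteq> 0" "Ti a s r \<noteq> 0"
    using ocomps_Cons_supp[OF h'] by blast
  have ih: "fst (i!j) \<le> fst (s!a)" using Suc.IH[of "Suc a" s] Suc.prems s by simp
  have ls: "a < length s" using lenB[OF s(1)] Suc.prems j by simp
  from supp_Ti[OF s(3)] show ?case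
  proof
    assume "r = swp s a"
    then have "r!(a-1) = s!a" using ls Suc.prems by (simp add: nth_swp)
    then show ?thesis using ih by simp
  next
    assume "r = s \<and> fst (s!a) \<le> fst (s!(a-1))"
    then show ?thesis using ih by simp
  qed
qed

lemma supp_W:
  assumes j: "1 \<le> j" "Suc j \<le> n" and i: "i \<in> Bs" and r: "r \<in> Bs" and h: "ocomps Bs (WL j) i r \<noteq> 0"
  shows "fst (i!0) < fst (r!0)"
proof -
  obtain s1 where s1: "s1 \<in> Bs" "ocomps Bs (map Ti [2..<Suc j] @ [Pi j]) i s1 \<noteq> 0" "ocomps Bs (thL (Suc j)) s1 r \<noteq> 0"
    using ocomps_app_supp[OF i r h[unfolded WL_def]] by blast
  obtain s0 where s0: "s0 \<in> Bs" "ocomps Bs [Pi j] i s0 \<noteq> 0" "ocomps Bs (map Ti [2..<Suc j]) s0 s1 \<noteq> 0"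
    using ocomps_app_supp[OF i s1(1) s1(2)] by blast
  have p: "s0 = i" "fst (i!0) < fst (i!j)" using supp_Pi[OF i s0(2)] by auto
  have x: "fst (i!j) \<le> fst (s1!1)"
    using supp_X[OF _ i, of j 2 "j - 1" s1] s0(3) p(1) s1(1) j by simp
  have t: "map fst r = map fst (rotl (Suc j) s1)"
    by (rule supp_thL[OF _ j(2) s1(1) r s1(3)]) simp
  have l: "Suc j \<le> length s1" using lenB[OF s1(1)] j by simp
  have "r!0 = r!0" ..
  have "fst (r!0) = fst (rotl (Suc j) s1 ! 0)"
  proof -
    have "0 < length r" using lenB[OF r] j by simp
    then show ?thesis using t by (metis length_map nth_map)
  qed
  also have "\<dots> = fst (s1!1)" using rotl_nth0[of "Suc j" s1] l j by simp
  finally show ?thesis using p x by simp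
qed


lemma Z_tri:
  assumes "1 \<le> j" "j \<le> n"
  shows "TriP (ocomps Bs (ZL j))"
  using assms
proof (induction j rule: dec_induct)
  case base
  have "ZL 1 = []" by (simp add: ZL_def XL_def thL_def)
  then show ?case by (simp add: TriP_def op_id_def)
next
  case (step j)
  have j: "1 \<le> j" "Suc j \<le> n" using step by auto
  have e: "\<And>i r. i \<in> Bs \<Longrightarrow> r \<in> Bs \<Longrightarrow> ocomps Bs (ZL (Suc j)) i r = ocomps Bs (ZL j) i r - tt * ocomps Bs (WL j) i r"
  proof -
    fix i r assume i: "i \<in> Bs" and r: "r \<in> Bs"
    show "ocomps Bs (ZL (Suc j)) i r = ocomps Bs (ZL j) i r - tt * ocomps Bs (WL j) i r"
      using Z_rec[OF j i, of "\<lambda>s. if s = r then 1 else 0"] entry_semR[OF i r] by simp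
  qed
  have IH: "TriP (ocomps Bs (ZL j))" using step by simp
  show ?case unfolding TriP_def
  proof (intro ballI conjI impI)
    fix i r assume i: "i \<in> Bs" and r: "r \<in> Bs"
    {
      assume ri: "r = i"
      have "ocomps Bs (WL j) i i = 0" using supp_W[OF j i i] by auto
      then show "ocomps Bs (ZL (Suc j)) i r = 1" using e[OF i r] IH i ri by (simp add: TriP_def)
    }
    {
      assume ri: "r \<noteq> i" and nz: "ocomps Bs (ZL (Suc j)) i r \<noteq> 0"
      then have "ocomps Bs (ZL j) i r \<noteq> 0 \<or> ocomps Bs (WL j) i r \<noteq> 0" using e[OF i r] by auto
      then show "fst (i!0) < fst (r!0)"
        using IH i r ri supp_W[OF j i r] by (auto simp: TriP_def)
    }
  qed
qed

lemma T0_entry: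
  assumes n1: "1 \<le> n" and i: "i \<in> Bs" and r: "r \<in> Bs"
  shows "T0_op Bs n k i r = QQ (fst (i!0)) * ocomps Bs (ZL n) i r"
proof -
  have "T0_op Bs n k i r = ocomps Bs [T0_op Bs n k] i r" using supp_single[OF i] by simp
  also have "\<dots> = ocomps Bs (ZL n @ [S0_op]) i r"
    using qv_entry[OF T0_qv[OF n1] i r] by (simp add: ZL_def)
  also have "\<dots> = semR Bs (ocomps Bs (ZL n @ [S0_op])) (\<lambda>s. if s = r then 1 else 0) i"
    using entry_semR[OF i r] by simp
  also have "\<dots> = QQ (fst (i!0)) * semR Bs (ocomps Bs (ZL n)) (\<lambda>s. if s = r then 1 else 0) i"
    unfolding semR_app using i by (simp add: semR_Cons semR_Nil S0_Dg Dg_app del: ocomps.simps)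
  also have "\<dots> = QQ (fst (i!0)) * ocomps Bs (ZL n) i r"
    using entry_semR[OF i r] by simp
  finally show ?thesis .
qed

lemma qv_rev: "(\<And>x y. x \<in> set L \<Longrightarrow> y \<in> set L \<Longrightarrow> qv [x, y] [y, x]) \<Longrightarrow> qv L (rev L)"
proof (induction L)
  case Nil then show ?case by simp
next
  case (Cons x L)
  have "qv (x # L) (L @ [x])" by (rule comm_list) (use Cons.prems in auto)
  also have "qv \<dots> (rev L @ [x])" by (rule qv_appR[OF Cons.IH]) (use Cons.prems in auto)
  finally show ?case by simp
qed

end

locale hbm = hb +
  fixes m :: nat
  assumes colB: "i \<in> Bs \<Longrightarrow> 1 \<le> fst (i!0) \<and> fst (i!0) \<le> m"
    and n1: "1 \<le> n"
begin

definition AQ :: "nat \<Rightarrow> op" where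
  "AQ c = oadd (T0_op Bs n k) (osmult (- QQ c) op_id)"

lemma semR_oadd: "semR Bs (oadd A B) G r = semR Bs A G r + semR Bs B G r"
  unfolding semR_def act_def oadd_def by (simp add: distrib_right sum.distrib)

lemma semR_osmult: "semR Bs (osmult c A) G r = c * semR Bs A G r"
  unfolding semR_def act_def osmult_def by (simp add: sum_distrib_left mult.assoc)

lemma semR_AQ: "semR Bs (AQ c) G r = semR Bs (T0_op Bs n k) G r + (- QQ c) * prj Bs G r"
  unfolding AQ_def semR_oadd semR_osmult semR_id[OF finB] ..

lemma AQ_comm: "qv [AQ c, AQ d] [AQ d, AQ c]"
proof (rule qvI)
  fix F i assume i: "i \<in> Bs"
  define T0 where "T0 = T0_op Bs n k"
  have f: "\<And>c. semR Bs (AQ c) F = (\<lambda>r. semR Bs T0 F r + (- QQ c) * prj Bs F r)"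
    by (rule ext) (simp add: semR_AQ T0_def)
  have g: "\<And>c d. semR Bs (AQ d) (semR Bs (AQ c) F) i =
      semR Bs T0 (semR Bs T0 F) i + (- QQ c) * semR Bs T0 F i + (- QQ d) * (semR Bs T0 F i + (- QQ c) * F i)"
  proof -
    fix c d
    have "semR Bs (AQ d) (semR Bs (AQ c) F) i = semR Bs T0 (semR Bs (AQ c) F) i + (- QQ d) * prj Bs (semR Bs (AQ c) F) i"
      unfolding semR_AQ T0_def ..
    also have "semR Bs T0 (semR Bs (AQ c) F) i = semR Bs T0 (semR Bs T0 F) i + (- QQ c) * semR Bs T0 F i"
      unfolding f semR_lin semR_prj_app ..
    also have "prj Bs (semR Bs (AQ c) F) i = semR Bs T0 F i + (- QQ c) * F i"
      using i by (simp add: semR_AQ T0_def prj_def)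
    finally show "semR Bs (AQ d) (semR Bs (AQ c) F) i =
      semR Bs T0 (semR Bs T0 F) i + (- QQ c) * semR Bs T0 F i + (- QQ d) * (semR Bs T0 F i + (- QQ c) * F i)" .
  qed
  show "semR Bs (ocomps Bs [AQ c, AQ d]) F i = semR Bs (ocomps Bs [AQ d, AQ c]) F i"
    apply (simp only: semR_Cons semR_Nil)
    using i by (simp add: g algebra_simps)
qed

lemma AQ_entry: "AQ c t r = T0_op Bs n k t r - QQ c * (if t = r then 1 else 0)"
  by (simp add: AQ_def oadd_def osmult_def op_id_def)

lemma kill:
  "s \<le> m \<Longrightarrow> i \<in> Bs \<Longrightarrow> r \<in> Bs \<Longrightarrow> ocomps Bs (map AQ (rev [1..<Suc s])) i r \<noteq> 0 \<Longrightarrow> s < fst (r!0)"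
proof (induction s arbitrary: r)
  case 0
  then have "r = i" using supp_Nil by simp
  then show ?case using colB[OF 0(2)] by simp
next
  case (Suc s)
  have h: "ocomps Bs (AQ (Suc s) # map AQ (rev [1..<Suc s])) i r \<noteq> 0" using Suc.prems by simp
  obtain t where t: "t \<in> Bs" "ocomps Bs (map AQ (rev [1..<Suc s])) i t \<noteq> 0" "AQ (Suc s) t r \<noteq> 0"
    using ocomps_Cons_supp[OF h] by blast
  have st: "s < fst (t!0)" using Suc.IH[OF _ Suc.prems(2) t(1) t(2)] Suc.prems by simp
  have tri: "TriP (ocomps Bs (ZL n))" using Z_tri[OF n1 order_refl] .
  show ?case
  proof (cases "r = t")
    case True
    have "ocomps Bs (ZL n) t t = 1" using tri t(1) by (simp add: TriP_def)
    then have "QQ (fst (t!0)) - QQ (Suc s) \<noteq> 0"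
      using t(3) True by (simp add: AQ_entry T0_entry[OF n1 t(1) t(1)])
    then have "fst (t!0) \<noteq> Suc s" by auto
    then show ?thesis using st True by simp
  next
    case False
    then have "T0_op Bs n k t r \<noteq> 0" using t(3) by (simp add: AQ_entry)
    then have "ocomps Bs (ZL n) t r \<noteq> 0" using T0_entry[OF n1 t(1) Suc.prems(3)] by auto
    then have "fst (t!0) < fst (r!0)" using tri t(1) Suc.prems(3) False by (auto simp: TriP_def)
    then show ?thesis using st by simp
  qed
qed

lemma G1: "oeq Bs (ocomps Bs (map (\<lambda>c. oadd (T0_op Bs n k) (osmult (- QQ c) op_id)) [1..<m+1])) (\<lambda>_ _. 0)"
proof -
  have e: "map (\<lambda>c. oadd (T0_op Bs n k) (osmult (- QQ c) op_id)) [1..<m+1] = map AQ [1..<Suc m]"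
    by (simp add: AQ_def)
  have q: "qv (map AQ [1..<Suc m]) (rev (map AQ [1..<Suc m]))"
    by (rule qv_rev) (auto intro: AQ_comm)
  show ?thesis unfolding e oeq_def
  proof (intro ballI)
    fix i r assume i: "i \<in> Bs" and r: "r \<in> Bs"
    have "ocomps Bs (map AQ [1..<Suc m]) i r = ocomps Bs (map AQ (rev [1..<Suc m])) i r"
      using qv_entry[OF q i r] by (simp add: rev_map)
    also have "\<dots> = 0"
    proof (rule ccontr)
      assume "ocomps Bs (map AQ (rev [1..<Suc m])) i r \<noteq> 0"
      then have "m < fst (r!0)" using kill[OF order_refl i r] by simp
      then show False using colB[OF r] by simp
    qed
    finally show "ocomps Bs (map AQ [1..<Suc m]) i r = 0" .
  qed
qed

end


lemma finite_basis: "finite (basis m n k l)"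
proof -
  define V where "V = (SIGMA c:{1..m}. {1..k c + l c})"
  have fV: "finite V" unfolding V_def by auto
  have "basis m n k l \<subseteq> {xs. set xs \<subseteq> V \<and> length xs = n}"
    unfolding basis_def V_def by auto
  moreover have "finite {xs. set xs \<subseteq> V \<and> length xs = n}"
    using finite_lists_length_eq[OF fV] by simp
  ultimately show ?thesis by (rule finite_subset)
qed

lemma set_swp: "1 \<le> a \<Longrightarrow> a < length i \<Longrightarrow> set (swp i a) \<subseteq> set i"
proof -
  assume a: "1 \<le> a" "a < length i"
  have m1: "i!a \<in> set i" "i!(a-1) \<in> set i" using a by auto
  have s1: "set (i[a-1 := i!a]) \<subseteq> set i"
    using set_update_subset_insert[of i "a-1" "i!a"] m1 by auto
  have "set (i[a-1 := i!a, a := i!(a-1)]) \<subseteq> insert (i!(a-1)) (set (i[a-1 := i!a]))"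
    by (rule set_update_subset_insert)
  then show ?thesis unfolding swp_def using s1 m1 by auto
qed

lemma basis_hbm:
  assumes "1 \<le> n"
  shows "hbm (basis m n k l) n m"
proof (unfold_locales)
  show "finite (basis m n k l)" by (rule finite_basis)
  show "\<And>i. i \<in> basis m n k l \<Longrightarrow> length i = n" by (simp add: basis_def)
  show "\<And>i a. i \<in> basis m n k l \<Longrightarrow> 1 \<le> a \<Longrightarrow> a < n \<Longrightarrow> swp i a \<in> basis m n k l"
  proof -
    fix i a assume i: "i \<in> basis m n k l" and a: "1 \<le> a" "a < n"
    have l: "length i = n" using i by (simp add: basis_def)
    have "set (swp i a) \<subseteq> set i" using set_swp[of a i] a l by simp
    moreover have "length (swp i a) = length i" by (simp add: swp_def)
    ultimately show "swp i a \<in> basis m n k l" using i l by (auto simp: basis_def)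
  qed
  show "\<And>i. i \<in> basis m n k l \<Longrightarrow> 1 \<le> fst (i!0) \<and> fst (i!0) \<le> m"
  proof -
    fix i assume i: "i \<in> basis m n k l"
    have "i!0 \<in> set i" using i assms by (simp add: basis_def)
    then show "1 \<le> fst (i!0) \<and> fst (i!0) \<le> m" using i by (auto simp: basis_def)
  qed
  show "1 \<le> n" by (rule assms)
qed

theorem mainTheorem1:
  fixes m n :: nat and k l :: "nat \<Rightarrow> nat"
  assumes "1 \<le> m" and "1 \<le> n" and "(\<Sum>c\<in>{1..m}. k c + l c) > 0"
  defines "Bs \<equiv> basis m n k l"
  defines "T \<equiv> TT Bs n k"
  shows
    "oeq Bs (ocomps Bs (map (\<lambda>c. oadd (T 0) (osmult (- QQ c) op_id)) [1..<m+1])) (\<lambda>_ _. 0)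
     \<and> (2 \<le> n \<longrightarrow> oeq Bs (ocomps Bs [T 0, T 1, T 0, T 1]) (ocomps Bs [T 1, T 0, T 1, T 0]))
     \<and> (\<forall>a\<in>{1..n-1}. oeq Bs (ocomp Bs (T a) (T a))
                         (oadd (osmult (qq - inverse qq) (T a)) op_id))
     \<and> (\<forall>a\<in>{0..n-1}. \<forall>b\<in>{0..n-1}. (a + 2 \<le> b \<or> b + 2 \<le> a) \<longrightarrow>
           oeq Bs (ocomp Bs (T a) (T b)) (ocomp Bs (T b) (T a)))
     \<and> (\<forall>a\<in>{1..n-2}. oeq Bs (ocomps Bs [T a, T (a+1), T a]) (ocomps Bs [T (a+1), T a, T (a+1)]))"
proof -
  interpret H: hbm Bs n k m unfolding Bs_def by (rule basis_hbm[OF assms(2)])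
  have T0: "T 0 = T0_op Bs n k" by (simp add: T_def TT_def)
  have Ta: "\<And>a. a \<noteq> 0 \<Longrightarrow> T a = T_op k a" by (simp add: T_def TT_def)
  have c1: "oeq Bs (ocomps Bs (map (\<lambda>c. oadd (T 0) (osmult (- QQ c) op_id)) [1..<m+1])) (\<lambda>_ _. 0)"
    unfolding T0 by (rule H.G1)
  have c2: "2 \<le> n \<longrightarrow> oeq Bs (ocomps Bs [T 0, T 1, T 0, T 1]) (ocomps Bs [T 1, T 0, T 1, T 0])"
    using H.qv_oeq[OF H.G2] by (simp add: T0 Ta del: ocomps.simps)
  have c3: "\<forall>a\<in>{1..n-1}. oeq Bs (ocomp Bs (T a) (T a)) (oadd (osmult (qq - inverse qq) (T a)) op_id)"
  proof
    fix a assume a: "a \<in> {1..n-1}"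
    then have a1: "1 \<le> a" "a < n" "a \<noteq> 0" by auto
    have "semR Bs (ocomp Bs (T_op k a) (T_op k a)) = semR Bs (oadd (osmult (qq - inverse qq) (T_op k a)) op_id)"
    proof (rule ext, rule ext)
      fix F i
      show "semR Bs (ocomp Bs (T_op k a) (T_op k a)) F i = semR Bs (oadd (osmult (qq - inverse qq) (T_op k a)) op_id) F i"
      proof (cases "i \<in> Bs")
        case False then show ?thesis by (simp add: H.outB)
      next
        case True
        then show ?thesis
          by (simp add: semR_comp H.semR_oadd H.semR_osmult semR_id[OF H.finB] prj_def H.hecke_sem[OF a1(1) a1(2)] tt_def)
      qed
    qed
    then show "oeq Bs (ocomp Bs (T a) (T a)) (oadd (osmult (qq - inverse qq) (T a)) op_id)"
      using oeq_semR[OF H.finB] Ta[OF a1(3)] by simp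
  qed
  have c4: "\<forall>a\<in>{0..n-1}. \<forall>b\<in>{0..n-1}. (a + 2 \<le> b \<or> b + 2 \<le> a) \<longrightarrow>
           oeq Bs (ocomp Bs (T a) (T b)) (ocomp Bs (T b) (T a))"
  proof (intro ballI impI)
    fix a b assume a: "a \<in> {0..n-1}" and b: "b \<in> {0..n-1}" and ab: "a + 2 \<le> b \<or> b + 2 \<le> a"
    have an: "a < n" and bn: "b < n" using a b assms(2) by auto
    show "oeq Bs (ocomp Bs (T a) (T b)) (ocomp Bs (T b) (T a))"
    proof (cases "a = 0")
      case True
      then have b2: "2 \<le> b" using ab by simp
      have "H.qv [T0_op Bs n k, T_op k b] [T_op k b, T0_op Bs n k]" by (rule H.G4_0[OF assms(2) b2 bn])
      then show ?thesis using True b2 by (simp add: H.oeq_ocomp_qv T0 Ta)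
    next
      case False
      note a0 = False
      show ?thesis
      proof (cases "b = 0")
        case True
        then have a2: "2 \<le> a" using ab by simp
        have "H.qv [T0_op Bs n k, T_op k a] [T_op k a, T0_op Bs n k]" by (rule H.G4_0[OF assms(2) a2 an])
        then have "H.qv [T_op k a, T0_op Bs n k] [T0_op Bs n k, T_op k a]" by (rule H.qv_sym)
        then show ?thesis using True a2 by (simp add: H.oeq_ocomp_qv T0 Ta)
      next
        case False
        have "H.qv [T_op k a, T_op k b] [T_op k b, T_op k a]"
          by (rule H.farTT) (use a0 False an bn ab in auto)
        then show ?thesis using a0 False by (simp add: H.oeq_ocomp_qv Ta)
      qed
    qed
  qed
  have c5: "\<forall>a\<in>{1..n-2}. oeq Bs (ocomps Bs [T a, T (a+1), T a]) (ocomps Bs [T (a+1), T a, T (a+1)])"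
  proof
    fix a assume a: "a \<in> {1..n-2}"
    then have a1: "1 \<le> a" "Suc a < n" by auto
    have "H.qv [T_op k a, T_op k (Suc a), T_op k a] [T_op k (Suc a), T_op k a, T_op k (Suc a)]"
      by (rule H.braidT[OF a1])
    then show "oeq Bs (ocomps Bs [T a, T (a+1), T a]) (ocomps Bs [T (a+1), T a, T (a+1)])"
      using H.qv_oeq a1 by (simp add: Ta del: ocomps.simps)
  qed
  show ?thesis using c1 c2 c3 c4 c5 by blast
qed

end
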